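(* Let $G$ be a finite nonabelian group. Then $\mathcal{X}=\bigcup_{g\in G\setminus Z(G)}\mathrm{Irr}(G/[g,G])$, and consequently $K(G)=\bigcap_{g\in G\setminus Z(G)}[g,G]$.
   Context: For $\chi\in\mathrm{Irr}(G)$, the center of $\chi$ is $Z(\chi)=\{g\in G : |\chi(g)|=\chi(1)\}$. Let $\mathcal{X}=\{\chi\in\mathrm{Irr}(G) : Z(\chi)>Z(G)\}$ (strict containment) and $K(G)=\bigcap_{\chi\in\mathcal{X}}\ker(\chi)$. For $g\in G$, $[g,G]$ is the subgroup generated by $\{[g,x] : x\in G\}$; it is normal in $G$. $\mathrm{Irr}(G/[g,G])$ is identified with the set of $\chi\in\mathrm{Irr}(G)$ with $[g,G]\le\ker(\chi)$. *)

theory Defs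
  imports "HOL-Algebra.Group" "HOL-Algebra.Generated_Groups" "Jordan_Normal_Form.Matrix"
begin

definition grp_center :: "('a, 'b) monoid_scheme \<Rightarrow> 'a set" where
  "grp_center G = {z \<in> carrier G. \<forall>x \<in> carrier G. z \<otimes>\<^bsub>G\<^esub> x = x \<otimes>\<^bsub>G\<^esub> z}"

definition grp_comm :: "('a, 'b) monoid_scheme \<Rightarrow> 'a \<Rightarrow> 'a \<Rightarrow> 'a" where
  "grp_comm G g x = inv\<^bsub>G\<^esub> g \<otimes>\<^bsub>G\<^esub> inv\<^bsub>G\<^esub> x \<otimes>\<^bsub>G\<^esub> g \<otimes>\<^bsub>G\<^esub> x"

definition comm_sub :: "('a, 'b) monoid_scheme \<Rightarrow> 'a \<Rightarrow> 'a set" where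
  "comm_sub G g = generate G {grp_comm G g x | x. x \<in> carrier G}"

definition is_rep :: "('a, 'b) monoid_scheme \<Rightarrow> nat \<Rightarrow> ('a \<Rightarrow> complex mat) \<Rightarrow> bool" where
  "is_rep G n \<rho> \<longleftrightarrow>
     (\<forall>g \<in> carrier G. \<rho> g \<in> carrier_mat n n) \<and>
     \<rho> \<one>\<^bsub>G\<^esub> = 1\<^sub>m n \<and>
     (\<forall>g \<in> carrier G. \<forall>h \<in> carrier G. \<rho> (g \<otimes>\<^bsub>G\<^esub> h) = \<rho> g * \<rho> h)"

definition invariant_subspace :: "('a, 'b) monoid_scheme \<Rightarrow> nat \<Rightarrow> ('a \<Rightarrow> complex mat) \<Rightarrow> complex vec set \<Rightarrow> bool" where
  "invariant_subspace G n \<rho> W \<longleftrightarrow>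
     W \<subseteq> carrier_vec n \<and> 0\<^sub>v n \<in> W \<and>
     (\<forall>v \<in> W. \<forall>w \<in> W. v + w \<in> W) \<and>
     (\<forall>c. \<forall>v \<in> W. c \<cdot>\<^sub>v v \<in> W) \<and>
     (\<forall>g \<in> carrier G. \<forall>w \<in> W. \<rho> g *\<^sub>v w \<in> W)"

definition irreducible_rep :: "('a, 'b) monoid_scheme \<Rightarrow> nat \<Rightarrow> ('a \<Rightarrow> complex mat) \<Rightarrow> bool" where
  "irreducible_rep G n \<rho> \<longleftrightarrow> is_rep G n \<rho> \<and> n > 0 \<and>
     (\<forall>W. invariant_subspace G n \<rho> W \<longrightarrow> W = {0\<^sub>v n} \<or> W = carrier_vec n)"

definition mat_trace :: "complex mat \<Rightarrow> complex" where
  "mat_trace A = (\<Sum>i < dim_row A. A $$ (i, i))"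

definition character :: "('a, 'b) monoid_scheme \<Rightarrow> ('a \<Rightarrow> complex mat) \<Rightarrow> 'a \<Rightarrow> complex" where
  "character G \<rho> = (\<lambda>g. if g \<in> carrier G then mat_trace (\<rho> g) else 0)"

definition Irr :: "('a, 'b) monoid_scheme \<Rightarrow> ('a \<Rightarrow> complex) set" where
  "Irr G = {\<chi>. \<exists>n \<rho>. irreducible_rep G n \<rho> \<and> \<chi> = character G \<rho>}"

definition char_ker :: "('a, 'b) monoid_scheme \<Rightarrow> ('a \<Rightarrow> complex) \<Rightarrow> 'a set" where
  "char_ker G \<chi> = {g \<in> carrier G. \<chi> g = \<chi> \<one>\<^bsub>G\<^esub>}"

definition char_center :: "('a, 'b) monoid_scheme \<Rightarrow> ('a \<Rightarrow> complex) \<Rightarrow> 'a set" where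
  "char_center G \<chi> = {g \<in> carrier G. complex_of_real (cmod (\<chi> g)) = \<chi> \<one>\<^bsub>G\<^esub>}"

definition Xset :: "('a, 'b) monoid_scheme \<Rightarrow> ('a \<Rightarrow> complex) set" where
  "Xset G = {\<chi> \<in> Irr G. grp_center G \<subset> char_center G \<chi>}"

definition K_grp :: "('a, 'b) monoid_scheme \<Rightarrow> 'a set" where
  "K_grp G = carrier G \<inter> (\<Inter>\<chi> \<in> Xset G. char_ker G \<chi>)"

(* Irr(G/N) identified with characters whose kernel contains N *)
definition Irr_quot :: "('a, 'b) monoid_scheme \<Rightarrow> 'a set \<Rightarrow> ('a \<Rightarrow> complex) set" where
  "Irr_quot G N = {\<chi> \<in> Irr G. N \<subseteq> char_ker G \<chi>}"

end

theory Submission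
  imports Defs "HOL-Algebra.Multiplicative_Group" "Jordan_Normal_Form.Jordan_Normal_Form_Existence"
    "Jordan_Normal_Form.Spectral_Radius"
begin
lemma mat_trace_comm:
  fixes A B :: "complex mat"
  assumes A: "A \<in> carrier_mat n k" and B: "B \<in> carrier_mat k n"
  shows "mat_trace (A * B) = mat_trace (B * A)"
proof -
  have "mat_trace (A * B) = (\<Sum>i<n. \<Sum>j<k. A $$ (i,j) * B $$ (j,i))"
    unfolding mat_trace_def using A B
    by (auto simp: scalar_prod_def lessThan_atLeast0 intro!: sum.cong)
  also have "\<dots> = (\<Sum>j<k. \<Sum>i<n. B $$ (j,i) * A $$ (i,j))"
    by (subst sum.swap) (simp add: mult.commute)
  also have "\<dots> = mat_trace (B * A)"
    unfolding mat_trace_def using A B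
    by (auto simp: scalar_prod_def lessThan_atLeast0 intro!: sum.cong)
  finally show ?thesis .
qed

lemma mat_trace_similar:
  fixes A J P Q :: "complex mat"
  assumes "similar_mat_wit A J P Q" "A \<in> carrier_mat n n"
  shows "mat_trace A = mat_trace J"
proof -
  from assms have P: "P \<in> carrier_mat n n" and Q: "Q \<in> carrier_mat n n" and J: "J \<in> carrier_mat n n"
    and QP: "Q * P = 1\<^sub>m n" and AE: "A = P * J * Q"
    unfolding similar_mat_wit_def Let_def by auto
  have "mat_trace A = mat_trace (P * (J * Q))" using AE P J Q by (simp add: assoc_mult_mat)
  also have "\<dots> = mat_trace ((J * Q) * P)" using P J Q by (intro mat_trace_comm) auto
  also have "\<dots> = mat_trace (J * (Q * P))" using P J Q by (simp add: assoc_mult_mat)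
  also have "\<dots> = mat_trace J" using QP J by simp
  finally show ?thesis .
qed

lemma jb_pow_one:
  fixes a :: complex
  assumes e: "jordan_block k a ^\<^sub>m m = 1\<^sub>m k" and m: "m > 0" and k: "k > 0"
  shows "k = 1 \<and> a ^ m = 1"
proof -
  have "(jordan_block k a ^\<^sub>m m) $$ (0,0) = 1" using e k by simp
  hence am: "a ^ m = 1" unfolding jordan_block_pow using k by simp
  hence a0: "a \<noteq> 0" using m by (metis power_0_left zero_neq_one neq0_conv)
  have "k = 1"
  proof (rule ccontr)
    assume "k \<noteq> 1"
    with k have k2: "1 < k" by auto
    have "(jordan_block k a ^\<^sub>m m) $$ (0,1) = 0" using e k2 by simp
    hence "of_nat m * a ^ (m - 1) = 0" unfolding jordan_block_pow using k2 by simp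
    thus False using a0 m by simp
  qed
  with am show ?thesis by simp
qed

lemma diag_block_one:
  fixes Bs :: "complex mat list"
  assumes "diag_block_mat Bs = 1\<^sub>m n" "\<And>B. B \<in> set Bs \<Longrightarrow> dim_row B = dim_col B"
  shows "\<forall>B \<in> set Bs. B = 1\<^sub>m (dim_row B)"
  using assms
proof (induct Bs arbitrary: n)
  case Nil thus ?case by simp
next
  case (Cons B Bs)
  let ?D = "diag_block_mat Bs"
  have sq: "dim_row ?D = dim_col ?D"
    using Cons(3) by (simp add: dim_diag_block_mat) (metis (no_types, lifting) map_eq_conv)
  have sqB: "dim_row B = dim_col B" using Cons(3) by simp
  have eq: "four_block_mat B (0\<^sub>m (dim_row B) (dim_col ?D)) (0\<^sub>m (dim_row ?D) (dim_col B)) ?D = 1\<^sub>m n"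
    using Cons(2) by (simp add: Let_def)
  hence n: "n = dim_row B + dim_row ?D"
    by (metis index_mat_four_block(2) index_one_mat(2))
  have "B = 1\<^sub>m (dim_row B)"
  proof (rule eq_matI)
    fix i j assume ij: "i < dim_row (1\<^sub>m (dim_row B))" "j < dim_col (1\<^sub>m (dim_row B))"
    have "four_block_mat B (0\<^sub>m (dim_row B) (dim_col ?D)) (0\<^sub>m (dim_row ?D) (dim_col B)) ?D $$ (i,j) = 1\<^sub>m n $$ (i,j)"
      by (simp add: eq)
    thus "B $$ (i,j) = 1\<^sub>m (dim_row B) $$ (i,j)" using ij sqB n by simp
  qed (use sqB in auto)
  moreover have "?D = 1\<^sub>m (dim_row ?D)"
  proof (rule eq_matI)
    fix i j assume ij: "i < dim_row (1\<^sub>m (dim_row ?D))" "j < dim_col (1\<^sub>m (dim_row ?D))"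
    have "four_block_mat B (0\<^sub>m (dim_row B) (dim_col ?D)) (0\<^sub>m (dim_row ?D) (dim_col B)) ?D $$ (i + dim_row B, j + dim_col B) = 1\<^sub>m n $$ (i + dim_row B, j + dim_col B)"
      by (simp add: eq)
    thus "?D $$ (i,j) = 1\<^sub>m (dim_row ?D) $$ (i,j)" using ij sqB sq n by simp
  qed (use sq in auto)
  hence "\<forall>B\<in>set Bs. B = 1\<^sub>m (dim_row B)" using Cons(1)[of "dim_row ?D"] Cons(3) by auto
  ultimately show ?case by simp
qed

lemma jordan_scalar:
  assumes "\<forall>(k,a) \<in> set n_as. k = 1 \<and> a = (c::complex)"
  shows "jordan_matrix n_as = c \<cdot>\<^sub>m 1\<^sub>m (length n_as)"
  using assms
proof (induct n_as)
  case Nil thus ?case by (auto simp: jordan_matrix_def)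
next
  case (Cons na n_as)
  obtain k a where na: "na = (k,a)" by force
  with Cons have ka: "k = 1" "a = c" by auto
  have sl: "sum_list (map fst n_as) = length n_as" using Cons(2)
    by (induct n_as) auto
  have IH: "jordan_matrix n_as = c \<cdot>\<^sub>m 1\<^sub>m (length n_as)" using Cons by auto
  show ?case unfolding na jordan_matrix_Cons IH ka sl
    by (rule eq_matI) (auto simp: jordan_block_def)
qed

lemma norm_sum_eq_card:
  fixes a :: "nat \<Rightarrow> complex"
  assumes n1: "\<And>i. i < N \<Longrightarrow> cmod (a i) = 1" and s: "cmod (\<Sum>i<N. a i) = N" and i: "i < N" and j: "j < N"
  shows "a i = a j"
proof -
  define s where "s = (\<Sum>i<N. a i)"
  have cs: "cmod (cnj s) = N" using s unfolding s_def complex_mod_cnj .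
  have le: "Re (cnj s * a l) \<le> N" if "l < N" for l
  proof -
    have "Re (cnj s * a l) \<le> cmod (cnj s * a l)" by (rule complex_Re_le_cmod)
    also have "\<dots> = N" using n1[OF that] cs by (simp add: norm_mult)
    finally show ?thesis .
  qed
  have "(\<Sum>l<N. Re (cnj s * a l)) = Re (\<Sum>l<N. cnj s * a l)" by (simp only: Re_sum)
  also have "\<dots> = Re (cnj s * s)" by (simp only: sum_distrib_left[symmetric] s_def)
  also have "\<dots> = (cmod s)^2" by (metis complex_norm_square mult.commute Re_complex_of_real of_real_power)
  finally have sumeq: "(\<Sum>l<N. (N - Re (cnj s * a l))) = 0"
    using s by (simp add: sum_subtractf s_def power2_eq_square)
  have eqN: "Re (cnj s * a l) = N" if "l < N" for l
  proof -
    have "\<forall>l\<in>{..<N}. N - Re (cnj s * a l) = 0"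
      using sum_nonneg_eq_0_iff[of "{..<N}" "\<lambda>l. N - Re (cnj s * a l)"] sumeq le by auto
    thus ?thesis using that by auto
  qed
  have eqz: "cnj s * a l = N" if "l < N" for l
  proof -
    let ?z = "cnj s * a l"
    have c: "cmod ?z = N" using n1[OF that] cs by (simp add: norm_mult)
    have "(Re ?z)^2 + (Im ?z)^2 = (cmod ?z)^2" by (simp add: cmod_power2)
    hence "Im ?z = 0" using c eqN[OF that] by simp
    thus ?thesis using eqN[OF that] by (simp add: complex_eq_iff)
  qed
  have "s \<noteq> 0" using s i by (auto simp: s_def)
  hence "cnj s \<noteq> 0" by simp
  thus ?thesis using eqz[OF i] eqz[OF j] by (metis mult_left_cancel)
qed

lemma sl1[simp]: "sum_list (map (fst \<circ> Pair (Suc 0)) as) = length as" by (induct as) auto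
lemma sl2[simp]: "sum_list (map fst (map (\<lambda>a. (1::nat, a)) as)) = length as" by (induct as) auto

lemma trace_jordan_ones:
  "mat_trace (jordan_matrix (map (\<lambda>a. (1::nat, a)) as)) = sum_list (as :: complex list)"
proof (induct as)
  case Nil thus ?case by (simp add: jordan_matrix_def mat_trace_def)
next
  case (Cons a as)
  let ?J = "jordan_matrix (map (\<lambda>a. (1::nat, a)) as)"
  have sl: "sum_list (map fst (map (\<lambda>a. (1::nat, a)) as)) = length as" by (induct as) auto
  have dJ: "dim_row ?J = length as" "dim_col ?J = length as" using sl by auto
  let ?F = "four_block_mat (jordan_block 1 a) (0\<^sub>m 1 (length as)) (0\<^sub>m (length as) 1) ?J"
  have e: "jordan_matrix (map (\<lambda>a. (1::nat, a)) (a # as)) = ?F"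
    by (simp only: list.map jordan_matrix_Cons sl)
  have dF: "dim_row ?F = Suc (length as)" using dJ by simp
  have F0: "?F $$ (0,0) = a" by simp
  have FS: "?F $$ (Suc i, Suc i) = ?J $$ (i,i)" if "i < length as" for i
    using that dJ by simp
  have "mat_trace ?F = (\<Sum>i<Suc (length as). ?F $$ (i,i))"
    unfolding mat_trace_def dF ..
  also have "\<dots> = ?F $$ (0,0) + (\<Sum>i<length as. ?F $$ (Suc i, Suc i))"
    by (rule sum.lessThan_Suc_shift)
  also have "\<dots> = a + (\<Sum>i<length as. ?J $$ (i,i))"
    unfolding F0 using FS by (intro arg_cong2[where f = "(+)"] sum.cong) auto
  also have "\<dots> = a + sum_list as" using Cons by (simp add: mat_trace_def dJ)
  finally have "mat_trace ?F = a + sum_list as" .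
  thus ?case using e by simp
qed

lemma scalar_of_finite_order:
  fixes A :: "complex mat"
  assumes A: "A \<in> carrier_mat n n" and m: "m > 0" and Am: "A ^\<^sub>m m = 1\<^sub>m n"
    and tr: "cmod (mat_trace A) = n"
  shows "\<exists>c. A = c \<cdot>\<^sub>m 1\<^sub>m n \<and> c ^ m = 1"
proof -
  from char_poly_factorized[OF A] obtain as where "char_poly A = (\<Prod>a\<leftarrow>as. [:- a, 1:])" by auto
  from jordan_nf_exists[OF A this] obtain n_as where jnf: "jordan_nf A n_as" by auto
  let ?J = "jordan_matrix n_as"
  from jnf obtain P Q where wit: "similar_mat_wit A ?J P Q" and nz: "0 \<notin> fst ` set n_as"
    unfolding jordan_nf_def similar_mat_def by auto
  note W = similar_mat_witD2[OF A wit]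
  have "?J ^\<^sub>m m = Q * A ^\<^sub>m m * P" by (rule similar_mat_wit_pow_id[OF similar_mat_wit_sym[OF wit]])
  also have "\<dots> = 1\<^sub>m n" using Am W by simp
  finally have Jm: "diag_block_mat (map (\<lambda>(k,a). jordan_block k a ^\<^sub>m m) n_as) = 1\<^sub>m n"
    by (simp add: jordan_matrix_pow)
  have blocks: "k = 1 \<and> a ^ m = 1" if "(k,a) \<in> set n_as" for k a
  proof -
    have "\<forall>B\<in>set (map (\<lambda>(k,a). jordan_block k a ^\<^sub>m m) n_as). B = 1\<^sub>m (dim_row B)"
      by (rule diag_block_one[OF Jm]) auto
    hence e1: "jordan_block k a ^\<^sub>m m = 1\<^sub>m k" using that by fastforce
    have k0: "k > 0" using nz that by (metis fst_conv image_eqI neq0_conv)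
    show ?thesis by (rule jb_pow_one[OF e1 m k0])
  qed
  define bs where "bs = map snd n_as"
  have "map (\<lambda>p. (1::nat, snd p)) n_as = n_as"
    by (rule map_idI) (use blocks in force)
  hence nas: "n_as = map (\<lambda>a. (1::nat, a)) bs" unfolding bs_def map_map by (simp add: comp_def)
  have "dim_row ?J = n" using W by auto
  hence len:  "length bs = n" unfolding nas by simp
  have norm1: "cmod (bs ! i) = 1" if "i < n" for i
  proof -
    have "(1, bs ! i) \<in> set n_as" unfolding nas using that len by auto
    hence "(bs ! i) ^ m = 1" using blocks by auto
    hence "cmod (bs ! i) ^ m = 1" by (simp add: norm_power[symmetric])
    thus ?thesis using m by (intro power_eq_imp_eq_base[of _ m 1]) auto
  qed
  have "mat_trace A = mat_trace ?J" by (rule mat_trace_similar[OF wit A])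
  also have "\<dots> = sum_list bs" unfolding nas by (rule trace_jordan_ones)
  also have "\<dots> = (\<Sum>i<n. bs ! i)" using len by (simp add: sum_list_sum_nth lessThan_atLeast0)
  finally have "cmod (\<Sum>i<n. bs ! i) = n" using tr by simp
  from norm_sum_eq_card[OF norm1 this] have eqs: "\<And>i j. i < n \<Longrightarrow> j < n \<Longrightarrow> bs ! i = bs ! j" .
  show ?thesis
  proof (cases "n = 0")
    case True
    thus ?thesis using A by (intro exI[of _ 1]) auto
  next
    case False
    define c where "c = bs ! 0"
    have bc: "x = c" if "x \<in> set bs" for x
    proof -
      from that obtain i where i: "i < length bs" "x = bs ! i" by (auto simp: in_set_conv_nth)
      thus ?thesis unfolding c_def using eqs[of i 0] False len by auto
    qed
    have "\<forall>(k,a) \<in> set n_as. k = 1 \<and> a = c" unfolding nas using bc by auto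
    from jordan_scalar[OF this] have "?J = c \<cdot>\<^sub>m 1\<^sub>m n" using len nas by simp
    hence "A = P * (c \<cdot>\<^sub>m 1\<^sub>m n) * Q" using W(3) by simp
    also have "\<dots> = c \<cdot>\<^sub>m (P * Q)" using W(6,7)
    proof -
      have "P * (c \<cdot>\<^sub>m 1\<^sub>m n) = c \<cdot>\<^sub>m (P * 1\<^sub>m n)" using W(6) by (rule mult_smult_distrib) (rule one_carrier_mat)
      also have "\<dots> = c \<cdot>\<^sub>m P" using W(6) by simp
      finally show ?thesis using W(6,7) by (simp add: mult_smult_assoc_mat[of P n n])
    qed
    also have "\<dots> = c \<cdot>\<^sub>m 1\<^sub>m n" using W(1) by simp
    finally have "A = c \<cdot>\<^sub>m 1\<^sub>m n" .
    moreover have "(1, c) \<in> set n_as" unfolding nas c_def using False len by auto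
    hence "c ^ m = 1" using blocks by auto
    ultimately show ?thesis by blast
  qed
qed

lemma carrier_mat_0_eq: "A \<in> carrier_mat 0 0 \<Longrightarrow> B \<in> carrier_mat 0 0 \<Longrightarrow> A = B"
  by (rule eq_matI) auto

lemma mat_eqI_on_vec:
  fixes A B :: "complex mat"
  assumes A: "A \<in> carrier_mat n n" and B: "B \<in> carrier_mat n n"
    and e: "\<And>v. v \<in> carrier_vec n \<Longrightarrow> A *\<^sub>v v = B *\<^sub>v v"
  shows "A = B"
proof (rule eq_matI)
  fix i j assume ij: "i < dim_row B" "j < dim_col B"
  have "(A *\<^sub>v unit_vec n j) $ i = (B *\<^sub>v unit_vec n j) $ i" using e[of "unit_vec n j"] by simp
  thus "A $$ (i,j) = B $$ (i,j)" using ij A B by (simp add: scalar_prod_right_unit)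
qed (use A B in auto)

lemma smult_one_mat_vec:
  fixes w :: "complex vec"
  assumes w: "w \<in> carrier_vec n"
  shows "(c \<cdot>\<^sub>m 1\<^sub>m n) *\<^sub>v w = c \<cdot>\<^sub>v w"
proof (rule eq_vecI)
  fix i assume i: "i < dim_vec (c \<cdot>\<^sub>v w)"
  hence i': "i < n" using w by simp
  have "row (c \<cdot>\<^sub>m 1\<^sub>m n) i = c \<cdot>\<^sub>v unit_vec n i" using i' by (intro eq_vecI) auto
  hence "((c \<cdot>\<^sub>m 1\<^sub>m n) *\<^sub>v w) $ i = (c \<cdot>\<^sub>v unit_vec n i) \<bullet> w" using i' by simp
  also have "\<dots> = c * w $ i" using w i' by (simp add: smult_scalar_prod_distrib[of _ n] scalar_prod_left_unit)
  finally show "((c \<cdot>\<^sub>m 1\<^sub>m n) *\<^sub>v w) $ i = (c \<cdot>\<^sub>v w) $ i" using i' w by simp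
qed (use w in simp)

lemma smult_one_one: "(1::complex) \<cdot>\<^sub>m 1\<^sub>m n = 1\<^sub>m n" by (rule eq_matI) auto

context
  fixes G :: "('a, 'b) monoid_scheme" (structure)
  assumes grp: "group G"
begin

interpretation group G by (rule grp)

lemma rep_carrier: "is_rep G n \<rho> \<Longrightarrow> x \<in> carrier G \<Longrightarrow> \<rho> x \<in> carrier_mat n n"
  unfolding is_rep_def by auto

lemma rep_one: "is_rep G n \<rho> \<Longrightarrow> \<rho> \<one> = 1\<^sub>m n"
  unfolding is_rep_def by auto

lemma rep_mult: "is_rep G n \<rho> \<Longrightarrow> x \<in> carrier G \<Longrightarrow> y \<in> carrier G \<Longrightarrow> \<rho> (x \<otimes> y) = \<rho> x * \<rho> y"
  unfolding is_rep_def by auto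

lemma rep_pow: assumes r: "is_rep G n \<rho>" and x: "x \<in> carrier G"
  shows "\<rho> (x [^] (k::nat)) = \<rho> x ^\<^sub>m k"
proof (induct k)
  case 0 thus ?case using rep_one[OF r] rep_carrier[OF r x] by simp
next
  case (Suc k)
  have "\<rho> (x [^] Suc k) = \<rho> (x [^] k \<otimes> x)" by simp
  also have "\<dots> = \<rho> (x [^] k) * \<rho> x" using rep_mult[OF r] x by simp
  finally show ?case using Suc by simp
qed

lemma rep_order: assumes r: "is_rep G n \<rho>" and x: "x \<in> carrier G" and fin: "finite (carrier G)"
  shows "\<rho> x ^\<^sub>m (Coset.order G) = 1\<^sub>m n" "Coset.order G > 0"
proof -
  have "\<rho> x ^\<^sub>m (Coset.order G) = \<rho> (x [^] Coset.order G)" using rep_pow[OF r x] by simp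
  also have "\<dots> = 1\<^sub>m n" using pow_order_eq_1[OF x] rep_one[OF r] by simp
  finally show "\<rho> x ^\<^sub>m (Coset.order G) = 1\<^sub>m n" .
  show "Coset.order G > 0" using fin order_gt_0_iff_finite by blast
qed

lemma rep_inv: assumes r: "is_rep G n \<rho>" and x: "x \<in> carrier G"
  shows "\<rho> (inv x) * \<rho> x = 1\<^sub>m n" "\<rho> x * \<rho> (inv x) = 1\<^sub>m n"
proof -
  show "\<rho> (inv x) * \<rho> x = 1\<^sub>m n" using rep_mult[OF r, of "inv x" x] x rep_one[OF r] by simp
  show "\<rho> x * \<rho> (inv x) = 1\<^sub>m n" using rep_mult[OF r, of x "inv x"] x rep_one[OF r] by simp
qed

lemma schur:
  assumes irr: "irreducible_rep G n \<rho>" and Bc: "B \<in> carrier_mat n n"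
    and comm: "\<And>x. x \<in> carrier G \<Longrightarrow> B * \<rho> x = \<rho> x * B"
  shows "\<exists>c. B = c \<cdot>\<^sub>m 1\<^sub>m n"
proof -
  from irr have r: "is_rep G n \<rho>" and n: "n > 0"
    and inv: "\<And>W. invariant_subspace G n \<rho> W \<Longrightarrow> W = {0\<^sub>v n} \<or> W = carrier_vec n"
    unfolding irreducible_rep_def by auto
  from spectrum_non_empty[OF Bc n] obtain c where "eigenvalue B c" unfolding spectrum_def by auto
  then obtain v where v: "v \<in> carrier_vec n" "v \<noteq> 0\<^sub>v n" "B *\<^sub>v v = c \<cdot>\<^sub>v v"
    unfolding eigenvalue_def eigenvector_def using Bc by auto
  define W where "W = {w \<in> carrier_vec n. B *\<^sub>v w = c \<cdot>\<^sub>v w}"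
  have "invariant_subspace G n \<rho> W"
    unfolding invariant_subspace_def
  proof (intro conjI ballI allI)
    show "W \<subseteq> carrier_vec n" unfolding W_def by auto
    show "0\<^sub>v n \<in> W" unfolding W_def using Bc by auto
    fix w1 w2 assume "w1 \<in> W" "w2 \<in> W"
    thus "w1 + w2 \<in> W" unfolding W_def using Bc
      by (auto simp: mult_add_distrib_mat_vec[OF Bc] smult_add_distrib_vec[of _ n])
  next
    fix a w assume "w \<in> W"
    thus "a \<cdot>\<^sub>v w \<in> W" unfolding W_def using Bc
      by (auto simp: mult_mat_vec[OF Bc] smult_smult_assoc mult.commute)
  next
    fix x w assume x: "x \<in> carrier G" and w: "w \<in> W"
    have rx: "\<rho> x \<in> carrier_mat n n" using rep_carrier[OF r x] .
    have "B *\<^sub>v (\<rho> x *\<^sub>v w) = (B * \<rho> x) *\<^sub>v w" using w rx Bc unfolding W_def by simp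
    also have "\<dots> = (\<rho> x * B) *\<^sub>v w" using comm[OF x] by simp
    also have "\<dots> = \<rho> x *\<^sub>v (c \<cdot>\<^sub>v w)" using w rx Bc unfolding W_def by simp
    also have "\<dots> = c \<cdot>\<^sub>v (\<rho> x *\<^sub>v w)" using w rx unfolding W_def by (simp add: mult_mat_vec)
    finally show "\<rho> x *\<^sub>v w \<in> W" using w rx unfolding W_def by simp
  qed
  from inv[OF this] have "W = carrier_vec n" using v unfolding W_def by auto
  hence "\<And>w. w \<in> carrier_vec n \<Longrightarrow> B *\<^sub>v w = (c \<cdot>\<^sub>m 1\<^sub>m n) *\<^sub>v w"
    unfolding W_def by (auto simp: smult_one_mat_vec)
  hence "B = c \<cdot>\<^sub>m 1\<^sub>m n" by (intro mat_eqI_on_vec[OF Bc]) auto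
  thus ?thesis by blast
qed

lemma mat_trace_smult_one: "mat_trace (c \<cdot>\<^sub>m 1\<^sub>m n) = of_nat n * c"
  unfolding mat_trace_def by simp

lemma mat_trace_one: "mat_trace (1\<^sub>m n) = of_nat n"
  unfolding mat_trace_def by simp

lemma character_one: "is_rep G n \<rho> \<Longrightarrow> character G \<rho> \<one> = of_nat n"
  unfolding character_def using rep_one[of n \<rho>] by (simp add: mat_trace_one)

lemma scalar_root_of_unity:
  assumes r: "is_rep G n \<rho>" and x: "x \<in> carrier G" and fin: "finite (carrier G)"
    and n: "n > 0" and e: "\<rho> x = c \<cdot>\<^sub>m 1\<^sub>m n"
  shows "cmod c = 1"
proof -
  have "(c \<cdot>\<^sub>m 1\<^sub>m n) ^\<^sub>m (Coset.order G) = 1\<^sub>m n" using rep_order[OF r x fin] e by simp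
  moreover have "(c \<cdot>\<^sub>m 1\<^sub>m n) ^\<^sub>m k = c ^ k \<cdot>\<^sub>m 1\<^sub>m n" for k
    by (induct k) (auto intro!: eq_matI)
  ultimately have "c ^ Coset.order G \<cdot>\<^sub>m 1\<^sub>m n = 1\<^sub>m n" by simp
  hence "(c ^ Coset.order G \<cdot>\<^sub>m 1\<^sub>m n) $$ (0,0) = 1\<^sub>m n $$ (0,0)" by simp
  hence "c ^ Coset.order G = 1" using n by simp
  hence "cmod c ^ Coset.order G = 1" by (simp add: norm_power[symmetric])
  thus ?thesis using rep_order(2)[OF r x fin] by (intro power_eq_imp_eq_base[of _ "Coset.order G" 1]) auto
qed

lemma char_center_iff:
  assumes r: "is_rep G n \<rho>" and x: "x \<in> carrier G" and fin: "finite (carrier G)" and n: "n > 0"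
  shows "x \<in> char_center G (character G \<rho>) \<longleftrightarrow> (\<exists>c. \<rho> x = c \<cdot>\<^sub>m 1\<^sub>m n)"
proof
  assume "x \<in> char_center G (character G \<rho>)"
  hence "complex_of_real (cmod (mat_trace (\<rho> x))) = of_nat n"
    unfolding char_center_def using character_one[OF r] x by (auto simp: character_def)
  hence tr: "cmod (mat_trace (\<rho> x)) = n" by (metis of_real_eq_iff of_real_of_nat_eq)
  from scalar_of_finite_order[OF rep_carrier[OF r x] rep_order(2)[OF r x fin] rep_order(1)[OF r x fin] tr]
  show "\<exists>c. \<rho> x = c \<cdot>\<^sub>m 1\<^sub>m n" by blast
next
  assume "\<exists>c. \<rho> x = c \<cdot>\<^sub>m 1\<^sub>m n"
  then obtain c where e: "\<rho> x = c \<cdot>\<^sub>m 1\<^sub>m n" by blast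
  have "cmod c = 1" by (rule scalar_root_of_unity[OF r x fin n e])
  hence "cmod (mat_trace (\<rho> x)) = n" unfolding e mat_trace_smult_one by (simp add: norm_mult)
  thus "x \<in> char_center G (character G \<rho>)"
    unfolding char_center_def using character_one[OF r] x by (auto simp: character_def)
qed

lemma char_ker_iff:
  assumes r: "is_rep G n \<rho>" and x: "x \<in> carrier G" and fin: "finite (carrier G)"
  shows "x \<in> char_ker G (character G \<rho>) \<longleftrightarrow> \<rho> x = 1\<^sub>m n"
proof
  assume "x \<in> char_ker G (character G \<rho>)"
  hence trn: "mat_trace (\<rho> x) = of_nat n"
    unfolding char_ker_def using character_one[OF r] x by (auto simp: character_def)
  hence tr: "cmod (mat_trace (\<rho> x)) = n" by simp
  from scalar_of_finite_order[OF rep_carrier[OF r x] rep_order(2)[OF r x fin] rep_order(1)[OF r x fin] tr]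
  obtain c where e: "\<rho> x = c \<cdot>\<^sub>m 1\<^sub>m n" by blast
  show "\<rho> x = 1\<^sub>m n"
  proof (cases "n = 0")
    case True thus ?thesis using rep_carrier[OF r x] by (intro carrier_mat_0_eq) auto
  next
    case False
    have "of_nat n * c = of_nat n" using trn unfolding e mat_trace_smult_one .
    hence "c = 1" using False by simp
    thus ?thesis using e smult_one_one by simp
  qed
next
  assume "\<rho> x = 1\<^sub>m n"
  thus "x \<in> char_ker G (character G \<rho>)"
    unfolding char_ker_def using character_one[OF r] x by (auto simp: character_def mat_trace_one)
qed

end

context
  fixes G :: "('a, 'b) monoid_scheme" (structure)
  assumes grp: "group G"
begin

interpretation group G by (rule grp)

lemma cancel_aux[simp]: "a \<in> carrier G \<Longrightarrow> y \<in> carrier G \<Longrightarrow> a \<otimes> (inv a \<otimes> y) = y"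
  by (simp add: m_assoc[symmetric])

lemma comm_closed: "g \<in> carrier G \<Longrightarrow> x \<in> carrier G \<Longrightarrow> grp_comm G g x \<in> carrier G"
  unfolding grp_comm_def by simp

lemma comm_eq: assumes g: "g \<in> carrier G" and x: "x \<in> carrier G"
  shows "x \<otimes> g \<otimes> grp_comm G g x = g \<otimes> x"
  unfolding grp_comm_def using g x by (simp add: m_assoc)

lemma rep_commute_of_scalar:
  assumes r: "is_rep G n \<rho>" and g: "g \<in> carrier G" and y: "y \<in> carrier G"
    and e: "\<rho> g = c \<cdot>\<^sub>m 1\<^sub>m n"
  shows "\<rho> (g \<otimes> y) = \<rho> (y \<otimes> g)"
proof -
  have ry: "\<rho> y \<in> carrier_mat n n" by (rule rep_carrier[OF grp r y])
  have "\<rho> (g \<otimes> y) = (c \<cdot>\<^sub>m 1\<^sub>m n) * \<rho> y" using rep_mult[OF grp r g y] e by simp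
  also have "\<dots> = c \<cdot>\<^sub>m \<rho> y" using ry by (simp add: mult_smult_assoc_mat[of _ n n])
  also have "\<dots> = \<rho> y * (c \<cdot>\<^sub>m 1\<^sub>m n)" using ry by (simp add: mult_smult_distrib[OF ry one_carrier_mat])
  also have "\<dots> = \<rho> (y \<otimes> g)" using rep_mult[OF grp r y g] e by simp
  finally show ?thesis .
qed

lemma scalar_iff_comm:
  assumes irr: "irreducible_rep G n \<rho>" and g: "g \<in> carrier G"
  shows "(\<exists>c. \<rho> g = c \<cdot>\<^sub>m 1\<^sub>m n) \<longleftrightarrow> (\<forall>x\<in>carrier G. \<rho> (grp_comm G g x) = 1\<^sub>m n)"
proof -
  have r: "is_rep G n \<rho>" using irr unfolding irreducible_rep_def by auto
  show ?thesis
  proof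
    assume "\<exists>c. \<rho> g = c \<cdot>\<^sub>m 1\<^sub>m n"
    then obtain c where e: "\<rho> g = c \<cdot>\<^sub>m 1\<^sub>m n" by blast
    show "\<forall>x\<in>carrier G. \<rho> (grp_comm G g x) = 1\<^sub>m n"
    proof
      fix x assume x: "x \<in> carrier G"
      have "grp_comm G g x = inv g \<otimes> (inv x \<otimes> g) \<otimes> x" unfolding grp_comm_def using g x by (simp add: m_assoc)
      hence "\<rho> (grp_comm G g x) = \<rho> (inv g) * \<rho> (inv x \<otimes> g) * \<rho> x"
        using g x by (simp add: rep_mult[OF grp r])
      also have "\<dots> = \<rho> (inv g) * \<rho> (g \<otimes> inv x) * \<rho> x"
        using rep_commute_of_scalar[OF r g _ e, of "inv x"] x by simp
      also have "\<dots> = \<rho> (inv g \<otimes> (g \<otimes> inv x) \<otimes> x)"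
        using g x by (simp add: rep_mult[OF grp r])
      also have "inv g \<otimes> (g \<otimes> inv x) \<otimes> x = \<one>" using g x by (simp add: m_assoc[symmetric])
      finally show "\<rho> (grp_comm G g x) = 1\<^sub>m n" using rep_one[OF grp r] by simp
    qed
  next
    assume c: "\<forall>x\<in>carrier G. \<rho> (grp_comm G g x) = 1\<^sub>m n"
    show "\<exists>c. \<rho> g = c \<cdot>\<^sub>m 1\<^sub>m n"
    proof (rule schur[OF grp irr rep_carrier[OF grp r g]])
      fix x assume x: "x \<in> carrier G"
      have "\<rho> g * \<rho> x = \<rho> (g \<otimes> x)" using rep_mult[OF grp r g x] by simp
      also have "\<dots> = \<rho> (x \<otimes> g \<otimes> grp_comm G g x)" using comm_eq[OF g x] by simp
      also have "\<dots> = \<rho> (x \<otimes> g) * 1\<^sub>m n" using c x g comm_closed[OF g x] rep_mult[OF grp r] by simp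
      also have "\<dots> = \<rho> x * \<rho> g" using rep_mult[OF grp r x g] rep_carrier[OF grp r] x g
        by (simp add: right_mult_one_mat[OF mult_carrier_mat[of _ n n _ n]])
      finally show "\<rho> g * \<rho> x = \<rho> x * \<rho> g" .
    qed
  qed
qed

lemma rep_kernel_subgroup:
  assumes r: "is_rep G n \<rho>"
  shows "subgroup {x \<in> carrier G. \<rho> x = 1\<^sub>m n} G"
proof (rule subgroupI)
  show "{x \<in> carrier G. \<rho> x = 1\<^sub>m n} \<subseteq> carrier G" by auto
  show "{x \<in> carrier G. \<rho> x = 1\<^sub>m n} \<noteq> {}" using rep_one[OF grp r] by auto
  fix a assume "a \<in> {x \<in> carrier G. \<rho> x = 1\<^sub>m n}"
  hence a: "a \<in> carrier G" "\<rho> a = 1\<^sub>m n" by auto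
  have "\<rho> (inv a) = \<rho> (inv a) * \<rho> a" using a rep_carrier[OF grp r, of "inv a"] by simp
  also have "\<dots> = 1\<^sub>m n" using rep_inv[OF grp r a(1)] by simp
  finally show "inv a \<in> {x \<in> carrier G. \<rho> x = 1\<^sub>m n}" using a by simp
next
  fix a b assume "a \<in> {x \<in> carrier G. \<rho> x = 1\<^sub>m n}" "b \<in> {x \<in> carrier G. \<rho> x = 1\<^sub>m n}"
  thus "a \<otimes> b \<in> {x \<in> carrier G. \<rho> x = 1\<^sub>m n}" using rep_mult[OF grp r] by auto
qed

lemma comm_set_sub: "g \<in> carrier G \<Longrightarrow> {grp_comm G g x | x. x \<in> carrier G} \<subseteq> carrier G"
  using comm_closed by auto

lemma comm_sub_carrier: "g \<in> carrier G \<Longrightarrow> comm_sub G g \<subseteq> carrier G"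
  unfolding comm_sub_def by (rule generate_incl[OF comm_set_sub])

lemma comm_sub_ker_iff:
  assumes r: "is_rep G n \<rho>" and g: "g \<in> carrier G" and fin: "finite (carrier G)"
  shows "comm_sub G g \<subseteq> char_ker G (character G \<rho>) \<longleftrightarrow> (\<forall>x\<in>carrier G. \<rho> (grp_comm G g x) = 1\<^sub>m n)"
proof -
  have ck: "char_ker G (character G \<rho>) = {x \<in> carrier G. \<rho> x = 1\<^sub>m n}"
    using char_ker_iff[OF grp r _ fin] unfolding char_ker_def by auto
  show ?thesis unfolding ck
  proof
    assume "comm_sub G g \<subseteq> {x \<in> carrier G. \<rho> x = 1\<^sub>m n}"
    moreover have "grp_comm G g x \<in> comm_sub G g" if "x \<in> carrier G" for x
      unfolding comm_sub_def using that by (intro generate.incl) auto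
    ultimately show "\<forall>x\<in>carrier G. \<rho> (grp_comm G g x) = 1\<^sub>m n" by auto
  next
    assume "\<forall>x\<in>carrier G. \<rho> (grp_comm G g x) = 1\<^sub>m n"
    hence "{grp_comm G g x | x. x \<in> carrier G} \<subseteq> {x \<in> carrier G. \<rho> x = 1\<^sub>m n}"
      using comm_closed[OF g] by auto
    thus "comm_sub G g \<subseteq> {x \<in> carrier G. \<rho> x = 1\<^sub>m n}"
      unfolding comm_sub_def by (rule generate_subgroup_incl[OF _ rep_kernel_subgroup[OF r]])
  qed
qed

lemma center_sub_char_center:
  assumes irr: "irreducible_rep G n \<rho>" and fin: "finite (carrier G)"
  shows "grp_center G \<subseteq> char_center G (character G \<rho>)"
proof
  fix z assume "z \<in> grp_center G"
  hence z: "z \<in> carrier G" and zc: "\<And>x. x \<in> carrier G \<Longrightarrow> z \<otimes> x = x \<otimes> z"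
    unfolding grp_center_def by auto
  have r: "is_rep G n \<rho>" and n: "n > 0" using irr unfolding irreducible_rep_def by auto
  have "\<exists>c. \<rho> z = c \<cdot>\<^sub>m 1\<^sub>m n"
  proof (rule schur[OF grp irr rep_carrier[OF grp r z]])
    fix x assume x: "x \<in> carrier G"
    show "\<rho> z * \<rho> x = \<rho> x * \<rho> z" using rep_mult[OF grp r z x] rep_mult[OF grp r x z] zc[OF x] by simp
  qed
  thus "z \<in> char_center G (character G \<rho>)" using char_center_iff[OF grp r z fin n] by simp
qed

lemma part1:
  assumes fin: "finite (carrier G)"
  shows "Xset G = (\<Union>g \<in> carrier G - grp_center G. Irr_quot G (comm_sub G g))"
proof
  show "Xset G \<subseteq> (\<Union>g \<in> carrier G - grp_center G. Irr_quot G (comm_sub G g))"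
  proof
    fix \<chi> assume "\<chi> \<in> Xset G"
    then obtain n \<rho> where irr: "irreducible_rep G n \<rho>" and chi: "\<chi> = character G \<rho>"
      and sub: "grp_center G \<subset> char_center G \<chi>" and ir: "\<chi> \<in> Irr G"
      unfolding Xset_def Irr_def by auto
    have r: "is_rep G n \<rho>" and n: "n > 0" using irr unfolding irreducible_rep_def by auto
    from sub obtain g where g: "g \<in> char_center G \<chi>" "g \<notin> grp_center G" by auto
    have gc: "g \<in> carrier G" using g unfolding char_center_def by auto
    have "\<exists>c. \<rho> g = c \<cdot>\<^sub>m 1\<^sub>m n" using char_center_iff[OF grp r gc fin n] g chi by simp
    hence "\<forall>x\<in>carrier G. \<rho> (grp_comm G g x) = 1\<^sub>m n" using scalar_iff_comm[OF irr gc] by simp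
    hence "comm_sub G g \<subseteq> char_ker G \<chi>" using comm_sub_ker_iff[OF r gc fin] chi by simp
    hence "\<chi> \<in> Irr_quot G (comm_sub G g)" using ir unfolding Irr_quot_def by simp
    thus "\<chi> \<in> (\<Union>g \<in> carrier G - grp_center G. Irr_quot G (comm_sub G g))" using gc g by auto
  qed
next
  show "(\<Union>g \<in> carrier G - grp_center G. Irr_quot G (comm_sub G g)) \<subseteq> Xset G"
  proof
    fix \<chi> assume "\<chi> \<in> (\<Union>g \<in> carrier G - grp_center G. Irr_quot G (comm_sub G g))"
    then obtain g where g: "g \<in> carrier G" "g \<notin> grp_center G" and q: "\<chi> \<in> Irr_quot G (comm_sub G g)" by auto
    from q obtain n \<rho> where irr: "irreducible_rep G n \<rho>" and chi: "\<chi> = character G \<rho>"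
      and ir: "\<chi> \<in> Irr G" and sub: "comm_sub G g \<subseteq> char_ker G \<chi>"
      unfolding Irr_quot_def Irr_def by auto
    have r: "is_rep G n \<rho>" and n: "n > 0" using irr unfolding irreducible_rep_def by auto
    have "\<forall>x\<in>carrier G. \<rho> (grp_comm G g x) = 1\<^sub>m n" using comm_sub_ker_iff[OF r g(1) fin] sub chi by simp
    hence "\<exists>c. \<rho> g = c \<cdot>\<^sub>m 1\<^sub>m n" using scalar_iff_comm[OF irr g(1)] by simp
    hence gin: "g \<in> char_center G \<chi>" using char_center_iff[OF grp r g(1) fin n] chi by simp
    have "grp_center G \<subseteq> char_center G \<chi>" using center_sub_char_center[OF irr fin] chi by simp
    hence "grp_center G \<subset> char_center G \<chi>" using gin g(2) by auto
    thus "\<chi> \<in> Xset G" using ir unfolding Xset_def by simp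
  qed
qed

end

definition ind :: "nat \<Rightarrow> complex vec list \<Rightarrow> bool" where
  "ind d ws \<longleftrightarrow> set ws \<subseteq> carrier_vec d \<and>
     (\<forall>c\<in>carrier_vec (length ws). mat_of_cols d ws *\<^sub>v c = 0\<^sub>v d \<longrightarrow> c = 0\<^sub>v (length ws))"

lemma moc_entry:
  assumes i: "i < d" and c: "c \<in> carrier_vec (length ws)"
  shows "(mat_of_cols d ws *\<^sub>v c) $ i = (\<Sum>j<length ws. (ws ! j) $ i * c $ j)"
  using i c by (simp add: scalar_prod_def mat_of_cols_def lessThan_atLeast0)

lemma moc_carrier[simp]: "mat_of_cols d ws *\<^sub>v c \<in> carrier_vec d"
  by (metis carrier_vec_dim_vec dim_mult_mat_vec mat_of_cols_carrier(2))

lemma moc_snoc: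
  fixes w :: "complex vec"
  assumes w: "w \<in> carrier_vec d" and c: "c \<in> carrier_vec (Suc (length ws))"
  shows "mat_of_cols d (ws @ [w]) *\<^sub>v c =
    mat_of_cols d ws *\<^sub>v vec (length ws) (\<lambda>i. c $ i) + c $ (length ws) \<cdot>\<^sub>v w"
proof (rule eq_vecI)
  fix i assume "i < dim_vec (mat_of_cols d ws *\<^sub>v vec (length ws) (\<lambda>i. c $ i) + c $ (length ws) \<cdot>\<^sub>v w)"
  hence i: "i < d" using w by simp
  have "(mat_of_cols d (ws @ [w]) *\<^sub>v c) $ i = (\<Sum>j<Suc (length ws). ((ws @ [w]) ! j) $ i * c $ j)"
    using moc_entry[OF i, of c "ws @ [w]"] c by simp
  also have "\<dots> = (\<Sum>j<length ws. (ws ! j) $ i * c $ j) + w $ i * c $ length ws"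
    by (simp add: nth_append)
  also have "\<dots> = (mat_of_cols d ws *\<^sub>v vec (length ws) (\<lambda>i. c $ i)) $ i + (c $ (length ws) \<cdot>\<^sub>v w) $ i"
    using moc_entry[OF i, of "vec (length ws) (\<lambda>i. c $ i)" ws] w i by (simp add: mult.commute[of "w $ i"])
  also have "\<dots> = (mat_of_cols d ws *\<^sub>v vec (length ws) (\<lambda>i. c $ i) + c $ (length ws) \<cdot>\<^sub>v w) $ i"
    using w i by simp
  finally show "(mat_of_cols d (ws @ [w]) *\<^sub>v c) $ i = \<dots>" .
qed (use w in simp)

lemma moc_Nil: "c \<in> carrier_vec 0 \<Longrightarrow> mat_of_cols d [] *\<^sub>v c = 0\<^sub>v d"
  by (rule eq_vecI) (auto simp: mat_of_cols_def scalar_prod_def)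

lemma moc_closed:
  fixes W :: "complex vec set"
  assumes W0: "0\<^sub>v d \<in> W" and Wadd: "\<And>v w. v \<in> W \<Longrightarrow> w \<in> W \<Longrightarrow> v + w \<in> W"
    and Wsm: "\<And>a v. v \<in> W \<Longrightarrow> a \<cdot>\<^sub>v v \<in> W" and WC: "W \<subseteq> carrier_vec d"
  shows "set ws \<subseteq> W \<Longrightarrow> c \<in> carrier_vec (length ws) \<Longrightarrow> mat_of_cols d ws *\<^sub>v c \<in> W"
proof (induct ws arbitrary: c rule: rev_induct)
  case Nil thus ?case using W0 by (simp add: moc_Nil)
next
  case (snoc w ws)
  have w: "w \<in> carrier_vec d" using snoc WC by auto
  have "mat_of_cols d ws *\<^sub>v vec (length ws) (\<lambda>i. c $ i) \<in> W" using snoc by auto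
  moreover have "c $ (length ws) \<cdot>\<^sub>v w \<in> W" using snoc Wsm by auto
  ultimately show ?case using moc_snoc[OF w, of c ws] snoc Wadd by auto
qed

lemma moc_pad:
  fixes c :: "complex vec"
  assumes c: "c \<in> carrier_vec (length ws)"
  shows "mat_of_cols d (ws @ us) *\<^sub>v (c @\<^sub>v 0\<^sub>v (length us)) = mat_of_cols d ws *\<^sub>v c"
proof (rule eq_vecI)
  fix i assume "i < dim_vec (mat_of_cols d ws *\<^sub>v c)"
  hence i: "i < d" by simp
  let ?f = "\<lambda>j. ((ws @ us) ! j) $ i * (c @\<^sub>v 0\<^sub>v (length us)) $ j"
  have "(mat_of_cols d (ws @ us) *\<^sub>v (c @\<^sub>v 0\<^sub>v (length us))) $ i = (\<Sum>j<length ws + length us. ?f j)"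
    using moc_entry[OF i, of _ "ws @ us"] c by simp
  also have "\<dots> = (\<Sum>j\<in>{0..<length ws}. ?f j) + (\<Sum>j\<in>{length ws..<length ws + length us}. ?f j)"
    by (simp add: lessThan_atLeast0 sum.atLeastLessThan_concat)
  also have "(\<Sum>j\<in>{length ws..<length ws + length us}. ?f j) = 0"
    using c by (intro sum.neutral) auto
  also have "(\<Sum>j\<in>{0..<length ws}. ?f j) = (\<Sum>j<length ws. (ws ! j) $ i * c $ j)"
    using c by (auto simp: lessThan_atLeast0 nth_append intro!: sum.cong)
  also have "\<dots> = (mat_of_cols d ws *\<^sub>v c) $ i" using moc_entry[OF i c] by simp
  finally show "(mat_of_cols d (ws @ us) *\<^sub>v (c @\<^sub>v 0\<^sub>v (length us))) $ i = (mat_of_cols d ws *\<^sub>v c) $ i" by simp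
qed simp

lemma ind_bound:
  assumes ind: "ind d ws"
  shows "length ws \<le> d"
proof (rule ccontr)
  assume "\<not> length ws \<le> d"
  hence L: "d < length ws" by simp
  define L where "L = length ws"
  define A where "A = mat L L (\<lambda>(i,j). if i < d then (ws ! j) $ i else 0)"
  have A: "A \<in> carrier_mat L L" unfolding A_def by simp
  have At: "transpose_mat A \<in> carrier_mat L L" using A by simp
  have "transpose_mat A *\<^sub>v unit_vec L (L - 1) = 0\<^sub>v L"
    using L unfolding A_def L_def by (intro eq_vecI) (auto simp: scalar_prod_right_unit)
  moreover have "unit_vec L (L - 1) \<noteq> 0\<^sub>v L" using L unfolding L_def by simp
  ultimately have "det (transpose_mat A) = 0"
    using det_0_iff_vec_prod_zero_field[OF At] by (metis unit_vec_carrier)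
  hence "det A = 0" using det_transpose[OF A] by simp
  then obtain v where v: "v \<in> carrier_vec L" "v \<noteq> 0\<^sub>v L" "A *\<^sub>v v = 0\<^sub>v L"
    using det_0_iff_vec_prod_zero_field[OF A] by auto
  have "mat_of_cols d ws *\<^sub>v v = 0\<^sub>v d"
  proof (rule eq_vecI)
    fix i assume "i < dim_vec (0\<^sub>v d :: complex vec)"
    hence i: "i < d" by simp
    have "(A *\<^sub>v v) $ i = (\<Sum>j<L. (ws ! j) $ i * v $ j)"
      using i L v(1) unfolding A_def L_def by (simp add: scalar_prod_def lessThan_atLeast0)
    thus "(mat_of_cols d ws *\<^sub>v v) $ i = 0\<^sub>v d $ i"
      using v(3) i L moc_entry[OF i, of v ws] v(1) unfolding L_def by simp
  qed simp
  with ind v show False unfolding ind_def L_def by auto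
qed

lemma ind_snoc:
  assumes ind: "ind d ws" and w: "w \<in> carrier_vec d"
    and nsp: "\<forall>c\<in>carrier_vec (length ws). w \<noteq> mat_of_cols d ws *\<^sub>v c"
  shows "ind d (ws @ [w])"
  unfolding ind_def
proof (intro conjI ballI impI)
  show "set (ws @ [w]) \<subseteq> carrier_vec d" using ind w unfolding ind_def by auto
  fix c assume c: "c \<in> carrier_vec (length (ws @ [w]))" and z: "mat_of_cols d (ws @ [w]) *\<^sub>v c = 0\<^sub>v d"
  let ?L = "length ws"
  let ?c = "vec ?L (\<lambda>i. c $ i)"
  have c': "c \<in> carrier_vec (Suc ?L)" using c by simp
  have e: "mat_of_cols d ws *\<^sub>v ?c + c $ ?L \<cdot>\<^sub>v w = 0\<^sub>v d" using moc_snoc[OF w c'] z by simp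
  have cL: "c $ ?L = 0"
  proof (rule ccontr)
    assume nz: "c $ ?L \<noteq> 0"
    have "w = mat_of_cols d ws *\<^sub>v ((- 1 / c $ ?L) \<cdot>\<^sub>v ?c)"
    proof -
      have "mat_of_cols d ws *\<^sub>v ((- 1 / c $ ?L) \<cdot>\<^sub>v ?c) = (- 1 / c $ ?L) \<cdot>\<^sub>v (mat_of_cols d ws *\<^sub>v ?c)"
        by (rule mult_mat_vec) auto
      also have "mat_of_cols d ws *\<^sub>v ?c = - (c $ ?L \<cdot>\<^sub>v w)"
      proof (rule eq_vecI)
        fix i assume "i < dim_vec (- (c $ ?L \<cdot>\<^sub>v w))"
        hence i: "i < d" using w by simp
        have "(mat_of_cols d ws *\<^sub>v ?c + c $ ?L \<cdot>\<^sub>v w) $ i = 0" using e i by simp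
        thus "(mat_of_cols d ws *\<^sub>v ?c) $ i = (- (c $ ?L \<cdot>\<^sub>v w)) $ i" using i w by (simp add: eq_neg_iff_add_eq_0)
      qed (use w in simp)
      finally show ?thesis using nz w by (auto intro!: eq_vecI)
    qed
    moreover have "(- 1 / c $ ?L) \<cdot>\<^sub>v ?c \<in> carrier_vec ?L" by simp
    ultimately show False using nsp by blast
  qed
  moreover have "0 \<cdot>\<^sub>v w = 0\<^sub>v d" using w by (intro eq_vecI) auto
  ultimately have "mat_of_cols d ws *\<^sub>v ?c = 0\<^sub>v d" using e w by (simp add: right_zero_vec[OF moc_carrier])
  hence "?c = 0\<^sub>v ?L" using ind unfolding ind_def by auto
  thus "c = 0\<^sub>v (length (ws @ [w]))" using cL c
    by (intro eq_vecI) (auto, metis index_vec index_zero_vec(1) less_antisym)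
qed

lemma ind_extend:
  assumes ind: "ind d ws0" and S: "S \<subseteq> carrier_vec d"
  shows "\<exists>us. set us \<subseteq> S \<and> ind d (ws0 @ us) \<and>
     (\<forall>w\<in>S. \<exists>c\<in>carrier_vec (length (ws0 @ us)). w = mat_of_cols d (ws0 @ us) *\<^sub>v c)"
proof -
  define Pr where "Pr L \<longleftrightarrow> (\<exists>us. length us = L \<and> set us \<subseteq> S \<and> ind d (ws0 @ us))" for L
  have PrI: "Pr L" if "length us' = L" "set us' \<subseteq> S" "ind d (ws0 @ us')" for L us'
    unfolding Pr_def using that by blast
  have P0: "Pr 0" unfolding Pr_def using ind by auto
  have bound: "y \<le> d" if "Pr y" for y
    using that ind_bound unfolding Pr_def by fastforce
  let ?L = "Greatest Pr"
  have "Pr ?L" by (rule GreatestI_nat[where P = Pr, OF P0 bound])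
  then obtain us where us: "length us = ?L" "set us \<subseteq> S" "ind d (ws0 @ us)" unfolding Pr_def by auto
  have "\<exists>c\<in>carrier_vec (length (ws0 @ us)). w = mat_of_cols d (ws0 @ us) *\<^sub>v c" if w: "w \<in> S" for w
  proof (rule ccontr)
    assume "\<not> ?thesis"
    hence "ind d ((ws0 @ us) @ [w])" using ind_snoc[OF us(3)] w S by auto
    hence "Pr (Suc ?L)" using us w by (intro PrI[of "us @ [w]"]) auto
    hence "Suc ?L \<le> ?L" by (rule Greatest_le_nat[where P = Pr, OF _ bound])
    thus False by simp
  qed
  thus ?thesis using us by blast
qed

lemma ind_square:
  assumes ind: "ind d vs"
    and span: "\<forall>w\<in>carrier_vec d. \<exists>c\<in>carrier_vec (length vs). w = mat_of_cols d vs *\<^sub>v c"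
  shows "length vs = d \<and> (\<exists>Q \<in> carrier_mat d d. Q * mat_of_cols d vs = 1\<^sub>m d \<and> mat_of_cols d vs * Q = 1\<^sub>m d)"
proof -
  define L where "L = length vs"
  define M where "M = mat_of_cols d vs"
  have M: "M \<in> carrier_mat d L" unfolding M_def L_def by simp
  define cs where "cs j = (SOME c. c \<in> carrier_vec L \<and> unit_vec d j = M *\<^sub>v c)" for j
  have cs: "cs j \<in> carrier_vec L \<and> unit_vec d j = M *\<^sub>v cs j" if "j < d" for j
  proof -
    have "\<exists>c. c \<in> carrier_vec L \<and> unit_vec d j = M *\<^sub>v c" using span that unfolding M_def L_def by auto
    thus ?thesis unfolding cs_def by (rule someI_ex)
  qed
  define R where "R = mat L d (\<lambda>(i,j). cs j $ i)"
  have R: "R \<in> carrier_mat L d" unfolding R_def by simp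
  have colR: "col R j = cs j" if "j < d" for j
    using cs[OF that] that unfolding R_def by (intro eq_vecI) auto
  have MR: "M * R = 1\<^sub>m d"
  proof (rule eq_matI)
    fix i j assume ij: "i < dim_row (1\<^sub>m d)" "j < dim_col (1\<^sub>m d)"
    hence "(M * R) $$ (i,j) = (M *\<^sub>v cs j) $ i" using M R colR by simp
    also have "\<dots> = unit_vec d j $ i" using cs ij by simp
    finally show "(M * R) $$ (i,j) = 1\<^sub>m d $$ (i,j)" using ij by simp
  qed (use M R in auto)
  have Ld: "L \<le> d" using ind_bound[OF ind] unfolding L_def by simp
  have "L = d"
  proof (rule ccontr)
    assume "L \<noteq> d"
    hence "\<not> d \<le> L" using Ld by simp
    hence "\<not> ind L (cols R)" using ind_bound[of L "cols R"] R by auto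
    moreover have "set (cols R) \<subseteq> carrier_vec L" using R cols_dim[of R] by auto
    ultimately obtain c where c: "c \<in> carrier_vec d" "R *\<^sub>v c = 0\<^sub>v L" "c \<noteq> 0\<^sub>v d"
      unfolding ind_def using R mat_of_cols_cols[of R] by auto
    have "c = (M * R) *\<^sub>v c" using MR c by simp
    also have "\<dots> = M *\<^sub>v (R *\<^sub>v c)" using M R c by simp
    also have "\<dots> = 0\<^sub>v d" using c M by (intro eq_vecI) (auto simp: scalar_prod_def)
    finally show False using c by simp
  qed
  moreover have "R * M = 1\<^sub>m d" using mat_mult_left_right_inverse[of M d R] M R MR \<open>L = d\<close> by simp
  ultimately show ?thesis using R MR unfolding M_def L_def by auto
qed

lemma ind_Nil: "ind d []"
  unfolding ind_def by auto

lemma basis_for_subspace: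
  fixes W :: "complex vec set"
  assumes W0: "0\<^sub>v d \<in> W" and Wadd: "\<And>v w. v \<in> W \<Longrightarrow> w \<in> W \<Longrightarrow> v + w \<in> W"
    and Wsm: "\<And>a v. v \<in> W \<Longrightarrow> a \<cdot>\<^sub>v v \<in> W" and WC: "W \<subseteq> carrier_vec d"
    and nz: "W \<noteq> {0\<^sub>v d}" and nf: "W \<noteq> carrier_vec d"
  shows "\<exists>k P Q. 0 < k \<and> k < d \<and> P \<in> carrier_mat d d \<and> Q \<in> carrier_mat d d \<and>
     Q * P = 1\<^sub>m d \<and> P * Q = 1\<^sub>m d \<and> (\<forall>j<k. col P j \<in> W) \<and>
     (\<forall>w\<in>W. \<forall>i. k \<le> i \<longrightarrow> i < d \<longrightarrow> (Q *\<^sub>v w) $ i = 0)"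
proof -
  from ind_extend[OF ind_Nil WC] obtain ws where ws: "set ws \<subseteq> W" "ind d ws"
    "\<forall>w\<in>W. \<exists>c\<in>carrier_vec (length ws). w = mat_of_cols d ws *\<^sub>v c" by auto
  from ind_extend[OF ws(2), of "carrier_vec d"] obtain us where us: "set us \<subseteq> carrier_vec d"
    "ind d (ws @ us)" "\<forall>w\<in>carrier_vec d. \<exists>c\<in>carrier_vec (length (ws @ us)). w = mat_of_cols d (ws @ us) *\<^sub>v c"
    by auto
  from ind_square[OF us(2,3)] obtain Q where len: "length (ws @ us) = d" and Q: "Q \<in> carrier_mat d d"
    "Q * mat_of_cols d (ws @ us) = 1\<^sub>m d" "mat_of_cols d (ws @ us) * Q = 1\<^sub>m d" by auto
  define P where "P = mat_of_cols d (ws @ us)"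
  define k where "k = length ws"
  have P: "P \<in> carrier_mat d d" unfolding P_def using len by (metis mat_of_cols_carrier(1))
  have wsC: "set ws \<subseteq> carrier_vec d" using ws WC by auto
  have k0: "0 < k"
  proof (rule ccontr)
    assume "\<not> 0 < k"
    hence "ws = []" unfolding k_def by simp
    have "W \<subseteq> {0\<^sub>v d}"
    proof
      fix w assume "w \<in> W"
      then obtain c where "c \<in> carrier_vec (length ws)" "w = mat_of_cols d ws *\<^sub>v c" using ws(3) by blast
      thus "w \<in> {0\<^sub>v d}" using \<open>ws = []\<close> moc_Nil by simp
    qed
    thus False using W0 nz by auto
  qed
  have kd: "k < d"
  proof (rule ccontr)
    assume "\<not> k < d"
    hence "us = []" using len unfolding k_def by (cases us) auto
    have "carrier_vec d \<subseteq> W"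
    proof
      fix v :: "complex vec" assume "v \<in> carrier_vec d"
      then obtain c where c: "c \<in> carrier_vec (length (ws @ us))" "v = mat_of_cols d (ws @ us) *\<^sub>v c"
        using us(3) by blast
      thus "v \<in> W" using moc_closed[OF W0 Wadd Wsm WC ws(1), of c] \<open>us = []\<close> by simp
    qed
    thus False using nf WC by auto
  qed
  have colP: "col P j \<in> W" if "j < k" for j
  proof -
    have "col P j = (ws @ us) ! j" unfolding P_def using that wsC len unfolding k_def
      by (intro col_mat_of_cols) (auto simp: nth_append)
    also have "\<dots> = ws ! j" using that unfolding k_def by (simp add: nth_append)
    finally show ?thesis using ws(1) that unfolding k_def by auto
  qed
  have coord: "(Q *\<^sub>v w) $ i = 0" if w: "w \<in> W" and i: "k \<le> i" "i < d" for w i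
  proof -
    from ws(3) w obtain c where c: "c \<in> carrier_vec (length ws)" "w = mat_of_cols d ws *\<^sub>v c" by auto
    define x where "x = c @\<^sub>v 0\<^sub>v (length us)"
    have cv: "x \<in> carrier_vec d" unfolding x_def using c(1) len
      by (metis append_carrier_vec length_append zero_carrier_vec)
    have "w = P *\<^sub>v x" unfolding P_def c(2) x_def using moc_pad[OF c(1)] by simp
    hence "Q *\<^sub>v w = Q *\<^sub>v (P *\<^sub>v x)" by simp
    also have "\<dots> = (Q * P) *\<^sub>v x" using assoc_mult_mat_vec[OF Q(1) P cv] by simp
    also have "\<dots> = x" using Q(2) cv unfolding P_def by simp
    finally show ?thesis using i c(1) len unfolding k_def x_def by simp
  qed
  show ?thesis using k0 kd P Q colP coord unfolding P_def by blast
qed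

lemma four_block_eq:
  assumes "A1 \<in> carrier_mat n1 m1" "A2 \<in> carrier_mat n1 m1" "B1 \<in> carrier_mat n1 m2" "B2 \<in> carrier_mat n1 m2"
    "C1 \<in> carrier_mat n2 m1" "C2 \<in> carrier_mat n2 m1" "D1 \<in> carrier_mat n2 m2" "D2 \<in> carrier_mat n2 m2"
    and e: "four_block_mat A1 B1 C1 D1 = four_block_mat A2 B2 C2 D2"
  shows "A1 = A2 \<and> B1 = B2 \<and> C1 = C2 \<and> D1 = D2"
proof -
  have E: "four_block_mat A1 B1 C1 D1 $$ (i,j) = four_block_mat A2 B2 C2 D2 $$ (i,j)" for i j
    using e by simp
  have "A1 = A2"
  proof (rule eq_matI)
    fix i j assume "i < dim_row A2" "j < dim_col A2"
    thus "A1 $$ (i,j) = A2 $$ (i,j)" using E[of i j] assms(1-8) by auto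
  qed (use assms in auto)
  moreover have "B1 = B2"
  proof (rule eq_matI)
    fix i j assume "i < dim_row B2" "j < dim_col B2"
    thus "B1 $$ (i,j) = B2 $$ (i,j)" using E[of i "j + m1"] assms(1-8) by auto
  qed (use assms in auto)
  moreover have "C1 = C2"
  proof (rule eq_matI)
    fix i j assume "i < dim_row C2" "j < dim_col C2"
    thus "C1 $$ (i,j) = C2 $$ (i,j)" using E[of "i + n1" j] assms(1-8) by auto
  qed (use assms in auto)
  moreover have "D1 = D2"
  proof (rule eq_matI)
    fix i j assume "i < dim_row D2" "j < dim_col D2"
    thus "D1 $$ (i,j) = D2 $$ (i,j)" using E[of "i + n1" "j + m1"] assms(1-8) by auto
  qed (use assms in auto)
  ultimately show ?thesis by blast
qed

lemma four_block_mult_ut: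
  fixes A1 :: "complex mat"
  assumes "A1 \<in> carrier_mat k k" "A2 \<in> carrier_mat k k" "B1 \<in> carrier_mat k l" "B2 \<in> carrier_mat k l"
    "C1 \<in> carrier_mat l l" "C2 \<in> carrier_mat l l"
  shows "four_block_mat A1 B1 (0\<^sub>m l k) C1 * four_block_mat A2 B2 (0\<^sub>m l k) C2 =
    four_block_mat (A1 * A2) (A1 * B2 + B1 * C2) (0\<^sub>m l k) (C1 * C2)"
proof -
  have "four_block_mat A1 B1 (0\<^sub>m l k) C1 * four_block_mat A2 B2 (0\<^sub>m l k) C2 =
    four_block_mat (A1 * A2 + B1 * 0\<^sub>m l k) (A1 * B2 + B1 * C2) (0\<^sub>m l k * A2 + C1 * 0\<^sub>m l k) (0\<^sub>m l k * B2 + C1 * C2)"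
    using assms by (intro mult_four_block_mat) auto
  also have "\<dots> = four_block_mat (A1 * A2) (A1 * B2 + B1 * C2) (0\<^sub>m l k) (C1 * C2)"
    using assms by (intro cong_four_block_mat)
      (auto simp: right_mult_zero_mat[of _ k l] left_mult_zero_mat[of _ k] right_mult_zero_mat[of _ l l]
        left_mult_zero_mat[of _ k l])
  finally show ?thesis .
qed

context
  fixes G :: "('a, 'b) monoid_scheme" (structure)
  assumes grp: "group G"
begin

interpretation group G by (rule grp)

lemma block_reps:
  assumes T: "is_rep G d T" and kd: "k \<le> d"
    and blk: "\<And>x. x \<in> carrier G \<Longrightarrow> A x \<in> carrier_mat k k \<and> B x \<in> carrier_mat k (d - k) \<and>
      C x \<in> carrier_mat (d - k) (d - k) \<and> T x = four_block_mat (A x) (B x) (0\<^sub>m (d - k) k) (C x)"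
  shows "is_rep G k A \<and> is_rep G (d - k) C"
proof -
  have bA: "A x \<in> carrier_mat k k" and bB: "B x \<in> carrier_mat k (d - k)"
    and bC: "C x \<in> carrier_mat (d - k) (d - k)"
    and bT: "T x = four_block_mat (A x) (B x) (0\<^sub>m (d - k) k) (C x)" if "x \<in> carrier G" for x
    using blk[OF that] by auto
  have o1: "four_block_mat (A \<one>) (B \<one>) (0\<^sub>m (d - k) k) (C \<one>) =
      four_block_mat (1\<^sub>m k) (0\<^sub>m k (d - k)) (0\<^sub>m (d - k) k) (1\<^sub>m (d - k))"
  proof -
    have "four_block_mat (A \<one>) (B \<one>) (0\<^sub>m (d - k) k) (C \<one>) = T \<one>" using bT[OF one_closed] by simp
    also have "\<dots> = 1\<^sub>m d" using rep_one[OF grp T] .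
    also have "\<dots> = 1\<^sub>m (k + (d - k))" using kd by simp
    also have "\<dots> = four_block_mat (1\<^sub>m k) (0\<^sub>m k (d - k)) (0\<^sub>m (d - k) k) (1\<^sub>m (d - k))"
      by (rule four_block_one_mat[symmetric])
    finally show ?thesis .
  qed
  from four_block_eq[OF bA[OF one_closed] one_carrier_mat bB[OF one_closed] zero_carrier_mat
      zero_carrier_mat zero_carrier_mat bC[OF one_closed] one_carrier_mat o1]
  have one: "A \<one> = 1\<^sub>m k" "C \<one> = 1\<^sub>m (d - k)" by auto
  have mult: "A (x \<otimes> y) = A x * A y \<and> C (x \<otimes> y) = C x * C y" if x: "x \<in> carrier G" and y: "y \<in> carrier G" for x y
  proof -
    have xy: "x \<otimes> y \<in> carrier G" using x y by simp
    have "four_block_mat (A (x \<otimes> y)) (B (x \<otimes> y)) (0\<^sub>m (d - k) k) (C (x \<otimes> y)) = T (x \<otimes> y)"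
      using bT[OF xy] by simp
    also have "\<dots> = T x * T y" using rep_mult[OF grp T x y] .
    also have "\<dots> = four_block_mat (A x) (B x) (0\<^sub>m (d - k) k) (C x) * four_block_mat (A y) (B y) (0\<^sub>m (d - k) k) (C y)"
      unfolding bT[OF x] bT[OF y] ..
    also have "\<dots> = four_block_mat (A x * A y) (A x * B y + B x * C y) (0\<^sub>m (d - k) k) (C x * C y)"
      by (rule four_block_mult_ut[OF bA[OF x] bA[OF y] bB[OF x] bB[OF y] bC[OF x] bC[OF y]])
    finally have e: "four_block_mat (A (x \<otimes> y)) (B (x \<otimes> y)) (0\<^sub>m (d - k) k) (C (x \<otimes> y)) =
       four_block_mat (A x * A y) (A x * B y + B x * C y) (0\<^sub>m (d - k) k) (C x * C y)" .
    have c2: "A x * A y \<in> carrier_mat k k" "A x * B y + B x * C y \<in> carrier_mat k (d - k)" "C x * C y \<in> carrier_mat (d - k) (d - k)"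
      using bA[OF x] bA[OF y] bB[OF x] bB[OF y] bC[OF x] bC[OF y] by auto
    from four_block_eq[OF bA[OF xy] c2(1) bB[OF xy] c2(2) zero_carrier_mat zero_carrier_mat bC[OF xy] c2(3) e]
    show ?thesis by simp
  qed
  have "is_rep G k A" unfolding is_rep_def
  proof (intro conjI ballI)
    fix x assume "x \<in> carrier G" thus "A x \<in> carrier_mat k k" by (rule bA)
  next
    show "A \<one> = 1\<^sub>m k" by (rule one(1))
  next
    fix x y assume "x \<in> carrier G" "y \<in> carrier G"
    thus "A (x \<otimes> y) = A x * A y" using mult by blast
  qed
  moreover have "is_rep G (d - k) C" unfolding is_rep_def
  proof (intro conjI ballI)
    fix x assume "x \<in> carrier G" thus "C x \<in> carrier_mat (d - k) (d - k)" by (rule bC)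
  next
    show "C \<one> = 1\<^sub>m (d - k)" by (rule one(2))
  next
    fix x y assume "x \<in> carrier G" "y \<in> carrier G"
    thus "C (x \<otimes> y) = C x * C y" using mult by blast
  qed
  ultimately show ?thesis ..
qed

lemma unipotent_pow:
  fixes Bm :: "complex mat"
  assumes Bm: "Bm \<in> carrier_mat k l"
  shows "four_block_mat (1\<^sub>m k) Bm (0\<^sub>m l k) (1\<^sub>m l) ^\<^sub>m j = four_block_mat (1\<^sub>m k) (of_nat j \<cdot>\<^sub>m Bm) (0\<^sub>m l k) (1\<^sub>m l)"
proof (induct j)
  case 0
  have "0 \<cdot>\<^sub>m Bm = 0\<^sub>m k l" using Bm by (intro eq_matI) auto
  thus ?case using Bm by simp
next
  case (Suc j)
  have "four_block_mat (1\<^sub>m k) Bm (0\<^sub>m l k) (1\<^sub>m l) ^\<^sub>m Suc j =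
    four_block_mat (1\<^sub>m k) (of_nat j \<cdot>\<^sub>m Bm) (0\<^sub>m l k) (1\<^sub>m l) * four_block_mat (1\<^sub>m k) Bm (0\<^sub>m l k) (1\<^sub>m l)"
    using Suc by simp
  also have "\<dots> = four_block_mat (1\<^sub>m k * 1\<^sub>m k) (1\<^sub>m k * Bm + (of_nat j \<cdot>\<^sub>m Bm) * 1\<^sub>m l) (0\<^sub>m l k) (1\<^sub>m l * 1\<^sub>m l)"
    using Bm by (intro four_block_mult_ut) auto
  also have "\<dots> = four_block_mat (1\<^sub>m k) (of_nat (Suc j) \<cdot>\<^sub>m Bm) (0\<^sub>m l k) (1\<^sub>m l)"
    using Bm by (intro cong_four_block_mat) (auto intro!: eq_matI simp: algebra_simps)
  finally show ?case .
qed

lemma block_decomp: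
  assumes r: "is_rep G d \<rho>" and W: "invariant_subspace G d \<rho> W"
    and nz: "W \<noteq> {0\<^sub>v d}" and nf: "W \<noteq> carrier_vec d"
  shows "\<exists>k P Q A B C. 0 < k \<and> k < d \<and> P \<in> carrier_mat d d \<and> Q \<in> carrier_mat d d \<and>
     Q * P = 1\<^sub>m d \<and> P * Q = 1\<^sub>m d \<and>
     (\<forall>x\<in>carrier G. A x \<in> carrier_mat k k \<and> B x \<in> carrier_mat k (d - k) \<and>
        C x \<in> carrier_mat (d - k) (d - k) \<and>
        Q * \<rho> x * P = four_block_mat (A x) (B x) (0\<^sub>m (d - k) k) (C x))"
proof -
  from W have W0: "0\<^sub>v d \<in> W" and Wadd: "\<And>v w. v \<in> W \<Longrightarrow> w \<in> W \<Longrightarrow> v + w \<in> W"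
    and Wsm: "\<And>a v. v \<in> W \<Longrightarrow> a \<cdot>\<^sub>v v \<in> W" and WC: "W \<subseteq> carrier_vec d"
    and Winv: "\<And>x w. x \<in> carrier G \<Longrightarrow> w \<in> W \<Longrightarrow> \<rho> x *\<^sub>v w \<in> W"
    unfolding invariant_subspace_def by auto
  from basis_for_subspace[OF W0 Wadd Wsm WC nz nf] obtain k P Q where
    kP: "0 < k" "k < d" "P \<in> carrier_mat d d" "Q \<in> carrier_mat d d" "Q * P = 1\<^sub>m d" "P * Q = 1\<^sub>m d"
    "\<forall>j<k. col P j \<in> W" "\<forall>w\<in>W. \<forall>i. k \<le> i \<longrightarrow> i < d \<longrightarrow> (Q *\<^sub>v w) $ i = 0" by blast
  define T where "T x = Q * \<rho> x * P" for x
  define A where "A x = mat k k (\<lambda>(i,j). T x $$ (i,j))" for x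
  define B where "B x = mat k (d - k) (\<lambda>(i,j). T x $$ (i, j + k))" for x
  define C where "C x = mat (d - k) (d - k) (\<lambda>(i,j). T x $$ (i + k, j + k))" for x
  have blk: "A x \<in> carrier_mat k k \<and> B x \<in> carrier_mat k (d - k) \<and>
        C x \<in> carrier_mat (d - k) (d - k) \<and>
        Q * \<rho> x * P = four_block_mat (A x) (B x) (0\<^sub>m (d - k) k) (C x)" if x: "x \<in> carrier G" for x
  proof -
    have rx: "\<rho> x \<in> carrier_mat d d" by (rule rep_carrier[OF grp r x])
    have Tx: "T x \<in> carrier_mat d d" unfolding T_def using kP rx by auto
    have low: "T x $$ (i, j) = 0" if i: "k \<le> i" "i < d" and j: "j < k" for i j
    proof -
      have e1: "T x $$ (i,j) = row (Q * \<rho> x) i \<bullet> col P j" unfolding T_def using i(2) j kP(2,3,4) rx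
        by (subst index_mult_mat(1)) auto
      have e2: "((Q * \<rho> x) *\<^sub>v col P j) $ i = row (Q * \<rho> x) i \<bullet> col P j" using i(2) kP(4) rx
        by (subst index_mult_mat_vec) auto
      have "T x $$ (i,j) = ((Q * \<rho> x) *\<^sub>v col P j) $ i" unfolding e1 e2 ..
      also have "\<dots> = (Q *\<^sub>v (\<rho> x *\<^sub>v col P j)) $ i"
      proof -
        have cj: "col P j \<in> carrier_vec d" using kP(3) carrier_vec_dim_vec[of "col P j"] by simp
        show ?thesis using assoc_mult_mat_vec[OF kP(4) rx cj] by simp
      qed
      also have "\<dots> = 0" using kP(7,8) Winv[OF x] j i by auto
      finally show ?thesis .
    qed
    have "T x = four_block_mat (A x) (B x) (0\<^sub>m (d - k) k) (C x)"
    proof (rule eq_matI)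
      fix i j assume ij: "i < dim_row (four_block_mat (A x) (B x) (0\<^sub>m (d - k) k) (C x))"
        "j < dim_col (four_block_mat (A x) (B x) (0\<^sub>m (d - k) k) (C x))"
      hence ij': "i < d" "j < d" using kP unfolding A_def C_def by auto
      show "T x $$ (i,j) = four_block_mat (A x) (B x) (0\<^sub>m (d - k) k) (C x) $$ (i,j)"
        using ij' low[of i j] kP unfolding A_def B_def C_def by auto
    qed (use Tx kP in \<open>auto simp: A_def C_def\<close>)
    thus ?thesis unfolding A_def B_def C_def T_def by auto
  qed
  show ?thesis using kP blk by blast
qed

end

lemma conj_back:
  fixes P Q M :: "complex mat"
  assumes P: "P \<in> carrier_mat d d" and Q: "Q \<in> carrier_mat d d" and M: "M \<in> carrier_mat d d"
    and PQ: "P * Q = 1\<^sub>m d"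
  shows "P * (Q * M * P) * Q = M"
proof -
  have QM: "Q * M \<in> carrier_mat d d" using Q M by simp
  have "P * (Q * M * P) * Q = P * (Q * M * P * Q)"
    by (rule assoc_mult_mat[OF P mult_carrier_mat[OF QM P] Q])
  also have "Q * M * P * Q = Q * M * (P * Q)" by (rule assoc_mult_mat[OF QM P Q])
  also have "\<dots> = Q * M" using PQ right_mult_one_mat[OF QM] by simp
  also have "P * (Q * M) = (P * Q) * M" by (rule assoc_mult_mat[OF P Q M, symmetric])
  also have "\<dots> = M" using PQ M by simp
  finally show ?thesis .
qed

context
  fixes G :: "('a, 'b) monoid_scheme" (structure)
  assumes grp: "group G"
begin

interpretation group G by (rule grp)

lemma reduce:
  assumes fin: "finite (carrier G)" and h: "h \<in> carrier G"
  shows "is_rep G d \<rho> \<Longrightarrow> \<rho> h \<noteq> 1\<^sub>m d \<Longrightarrow> \<exists>d' \<sigma>. irreducible_rep G d' \<sigma> \<and> \<sigma> h \<noteq> 1\<^sub>m d' \<and>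
     (\<forall>x\<in>carrier G. \<rho> x = 1\<^sub>m d \<longrightarrow> \<sigma> x = 1\<^sub>m d')"
proof (induct d arbitrary: \<rho> rule: less_induct)
  case (less d)
  note r = less(2) and nh = less(3)
  show ?case
  proof (cases "irreducible_rep G d \<rho>")
    case True thus ?thesis using nh by blast
  next
    case False
    have d0: "d > 0"
    proof (rule ccontr)
      assume "\<not> d > 0"
      hence "d = 0" by simp
      thus False using nh rep_carrier[OF grp r h] carrier_mat_0_eq[of "\<rho> h" "1\<^sub>m 0"] by auto
    qed
    from False r d0 obtain W where W: "invariant_subspace G d \<rho> W" "W \<noteq> {0\<^sub>v d}" "W \<noteq> carrier_vec d"
      unfolding irreducible_rep_def by auto
    from block_decomp[OF grp r W] obtain k P Q A B C where
      kP: "0 < k" "k < d" "P \<in> carrier_mat d d" "Q \<in> carrier_mat d d" "Q * P = 1\<^sub>m d" "P * Q = 1\<^sub>m d"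
      and blk: "\<forall>x\<in>carrier G. A x \<in> carrier_mat k k \<and> B x \<in> carrier_mat k (d - k) \<and>
        C x \<in> carrier_mat (d - k) (d - k) \<and> Q * \<rho> x * P = four_block_mat (A x) (B x) (0\<^sub>m (d - k) k) (C x)"
      by blast
    define T where "T x = Q * \<rho> x * P" for x
    have T: "is_rep G d T" unfolding is_rep_def
    proof (intro conjI ballI)
      fix x assume x: "x \<in> carrier G"
      show "T x \<in> carrier_mat d d" unfolding T_def using kP rep_carrier[OF grp r x] by auto
    next
      show "T \<one> = 1\<^sub>m d" unfolding T_def using kP rep_one[OF grp r] by simp
    next
      fix x y assume x: "x \<in> carrier G" and y: "y \<in> carrier G"
      have rx: "\<rho> x \<in> carrier_mat d d" and ry: "\<rho> y \<in> carrier_mat d d"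
        using rep_carrier[OF grp r] x y by auto
      have PQM: "P * (Q * M) = M" if "M \<in> carrier_mat d d" for M
      proof -
        have "P * (Q * M) = (P * Q) * M" using kP(3,4) that by (rule assoc_mult_mat[symmetric])
        thus ?thesis using kP(6) that by simp
      qed
      have Qx: "Q * \<rho> x \<in> carrier_mat d d" using kP(4) rx by simp
      have yP: "\<rho> y * P \<in> carrier_mat d d" using kP(3) ry by simp
      have c: "Q * \<rho> y * P = Q * (\<rho> y * P)" by (rule assoc_mult_mat[OF kP(4) ry kP(3)])
      have "T x * T y = (Q * \<rho> x * P) * (Q * (\<rho> y * P))" unfolding T_def c ..
      also have "\<dots> = (Q * \<rho> x) * (P * (Q * (\<rho> y * P)))"
        by (rule assoc_mult_mat[OF Qx kP(3) mult_carrier_mat[OF kP(4) yP]])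
      also have "P * (Q * (\<rho> y * P)) = \<rho> y * P" by (rule PQM[OF yP])
      also have "(Q * \<rho> x) * (\<rho> y * P) = ((Q * \<rho> x) * \<rho> y) * P"
        by (rule assoc_mult_mat[OF Qx ry kP(3), symmetric])
      also have "(Q * \<rho> x) * \<rho> y = Q * (\<rho> x * \<rho> y)" by (rule assoc_mult_mat[OF kP(4) rx ry])
      also have "\<rho> x * \<rho> y = \<rho> (x \<otimes> y)" using rep_mult[OF grp r x y] by simp
      finally have "T x * T y = Q * \<rho> (x \<otimes> y) * P" .
      thus "T (x \<otimes> y) = T x * T y" unfolding T_def by (rule sym)
    qed
    have blkT: "\<And>x. x \<in> carrier G \<Longrightarrow> A x \<in> carrier_mat k k \<and> B x \<in> carrier_mat k (d - k) \<and>
      C x \<in> carrier_mat (d - k) (d - k) \<and> T x = four_block_mat (A x) (B x) (0\<^sub>m (d - k) k) (C x)"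
      using blk unfolding T_def by auto
    from block_reps[OF grp T _ blkT] kP have rA: "is_rep G k A" and rC: "is_rep G (d - k) C" by auto
    have kerT: "A x = 1\<^sub>m k \<and> C x = 1\<^sub>m (d - k)" if x: "x \<in> carrier G" and ex: "\<rho> x = 1\<^sub>m d" for x
    proof -
      have "four_block_mat (A x) (B x) (0\<^sub>m (d - k) k) (C x) = T x" using blkT[OF x] by simp
      also have "\<dots> = 1\<^sub>m d" unfolding T_def ex using kP by simp
      also have "\<dots> = four_block_mat (1\<^sub>m k) (0\<^sub>m k (d - k)) (0\<^sub>m (d - k) k) (1\<^sub>m (d - k))" using kP by simp
      finally have e: "four_block_mat (A x) (B x) (0\<^sub>m (d - k) k) (C x) = four_block_mat (1\<^sub>m k) (0\<^sub>m k (d - k)) (0\<^sub>m (d - k) k) (1\<^sub>m (d - k))" .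
      have c: "A x \<in> carrier_mat k k" "B x \<in> carrier_mat k (d - k)" "C x \<in> carrier_mat (d - k) (d - k)"
        using blkT[OF x] by auto
      from four_block_eq[OF c(1) one_carrier_mat c(2) zero_carrier_mat zero_carrier_mat zero_carrier_mat c(3) one_carrier_mat e]
      show ?thesis by simp
    qed
    show ?thesis
    proof (cases "A h = 1\<^sub>m k")
      case False
      from less(1)[OF kP(2) rA False] obtain d' \<sigma> where
        s: "irreducible_rep G d' \<sigma>" "\<sigma> h \<noteq> 1\<^sub>m d'" "\<forall>x\<in>carrier G. A x = 1\<^sub>m k \<longrightarrow> \<sigma> x = 1\<^sub>m d'" by blast
      thus ?thesis using kerT by blast
    next
      case Ah: True
      show ?thesis
      proof (cases "C h = 1\<^sub>m (d - k)")
        case False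
        from less(1)[OF _ rC False] kP obtain d' \<sigma> where
          s: "irreducible_rep G d' \<sigma>" "\<sigma> h \<noteq> 1\<^sub>m d'" "\<forall>x\<in>carrier G. C x = 1\<^sub>m (d - k) \<longrightarrow> \<sigma> x = 1\<^sub>m d'" by auto
        thus ?thesis using kerT by blast
      next
        case Ch: True
        define N where "N = Coset.order G"
        have N: "N > 0" unfolding N_def using rep_order(2)[OF grp T h fin] .
        have Bh: "B h \<in> carrier_mat k (d - k)" using blkT[OF h] by auto
        have Th: "T h = four_block_mat (1\<^sub>m k) (B h) (0\<^sub>m (d - k) k) (1\<^sub>m (d - k))" using blkT[OF h] Ah Ch by simp
        have "four_block_mat (1\<^sub>m k) (of_nat N \<cdot>\<^sub>m B h) (0\<^sub>m (d - k) k) (1\<^sub>m (d - k)) = T h ^\<^sub>m N"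
          unfolding Th by (rule unipotent_pow[OF grp Bh, symmetric])
        also have "\<dots> = 1\<^sub>m d" unfolding N_def by (rule rep_order(1)[OF grp T h fin])
        also have "\<dots> = four_block_mat (1\<^sub>m k) (0\<^sub>m k (d - k)) (0\<^sub>m (d - k) k) (1\<^sub>m (d - k))" using kP by simp
        finally have e: "four_block_mat (1\<^sub>m k) (of_nat N \<cdot>\<^sub>m B h) (0\<^sub>m (d - k) k) (1\<^sub>m (d - k)) = four_block_mat (1\<^sub>m k) (0\<^sub>m k (d - k)) (0\<^sub>m (d - k) k) (1\<^sub>m (d - k))" .
        have sB: "of_nat N \<cdot>\<^sub>m B h \<in> carrier_mat k (d - k)" using Bh by simp
        from four_block_eq[OF one_carrier_mat one_carrier_mat sB zero_carrier_mat zero_carrier_mat zero_carrier_mat one_carrier_mat one_carrier_mat e]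
        have "of_nat N \<cdot>\<^sub>m B h = 0\<^sub>m k (d - k)" by simp
        hence B0: "B h = 0\<^sub>m k (d - k)"
        proof -
          assume e: "of_nat N \<cdot>\<^sub>m B h = 0\<^sub>m k (d - k)"
          show ?thesis
          proof (rule eq_matI)
            fix i j assume ij: "i < dim_row (0\<^sub>m k (d - k) :: complex mat)" "j < dim_col (0\<^sub>m k (d - k) :: complex mat)"
            have "(of_nat N \<cdot>\<^sub>m B h) $$ (i,j) = 0" using e ij by simp
            thus "B h $$ (i,j) = 0\<^sub>m k (d - k) $$ (i,j)" using ij Bh N by simp
          qed (use Bh in auto)
        qed
        have "T h = 1\<^sub>m d" unfolding Th B0 using kP by simp
        hence "P * T h * Q = P * Q" using kP by simp
        moreover have "P * T h * Q = \<rho> h" unfolding T_def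
          by (rule conj_back[OF kP(3,4) rep_carrier[OF grp r h] kP(6)])
        ultimately have "\<rho> h = 1\<^sub>m d" using kP by simp
        thus ?thesis using nh by simp
      qed
    qed
  qed
qed

end

context
  fixes G :: "('a, 'b) monoid_scheme" (structure)
  assumes grp: "group G"
begin

interpretation group G by (rule grp)

lemma cancel_aux2[simp]: "a \<in> carrier G \<Longrightarrow> y \<in> carrier G \<Longrightarrow> inv a \<otimes> (a \<otimes> y) = y"
  by (simp add: m_assoc[symmetric])

lemma conj_comm:
  assumes g: "g \<in> carrier G" and x: "x \<in> carrier G" and y: "y \<in> carrier G"
  shows "y \<otimes> grp_comm G g x \<otimes> inv y = inv (grp_comm G g (inv y)) \<otimes> grp_comm G g (x \<otimes> inv y)"
  unfolding grp_comm_def using g x y by (simp add: m_assoc inv_mult_group)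

lemma comm_sub_normal:
  assumes g: "g \<in> carrier G"
  shows "comm_sub G g \<lhd> G"
proof -
  let ?S = "{grp_comm G g x | x. x \<in> carrier G}"
  have S: "?S \<subseteq> carrier G" using comm_closed[OF grp g] by auto
  show ?thesis unfolding comm_sub_def
  proof (rule normal_invI[OF generate_is_subgroup[OF S]])
    fix y h assume y: "y \<in> carrier G" and h: "h \<in> generate G ?S"
    from h show "y \<otimes> h \<otimes> inv y \<in> generate G ?S"
    proof (induct h rule: generate.induct)
      case one thus ?case using y generate.one by simp
    next
      case (incl h)
      then obtain x where x: "x \<in> carrier G" "h = grp_comm G g x" by auto
      have a: "grp_comm G g (inv y) \<in> generate G ?S" using y by (intro generate.incl) auto
      have b: "grp_comm G g (x \<otimes> inv y) \<in> generate G ?S" using y x by (intro generate.incl) auto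
      have "inv (grp_comm G g (inv y)) \<otimes> grp_comm G g (x \<otimes> inv y) \<in> generate G ?S"
        by (rule generate.eng[OF generate_m_inv_closed[OF S a] b])
      thus ?case using conj_comm[OF g x(1) y] x(2) by simp
    next
      case (inv h)
      then obtain x where x: "x \<in> carrier G" "h = grp_comm G g x" by auto
      have hc: "h \<in> carrier G" using x comm_closed[OF grp g] by simp
      have "y \<otimes> h \<otimes> inv y \<in> generate G ?S"
      proof -
        have a: "grp_comm G g (inv y) \<in> generate G ?S" using y by (intro generate.incl) auto
        have b: "grp_comm G g (x \<otimes> inv y) \<in> generate G ?S" using y x by (intro generate.incl) auto
        have "inv (grp_comm G g (inv y)) \<otimes> grp_comm G g (x \<otimes> inv y) \<in> generate G ?S"
          by (rule generate.eng[OF generate_m_inv_closed[OF S a] b])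
        thus ?thesis using conj_comm[OF g x(1) y] x(2) by simp
      qed
      hence "inv (y \<otimes> h \<otimes> inv y) \<in> generate G ?S" by (rule generate_m_inv_closed[OF S])
      moreover have "inv (y \<otimes> h \<otimes> inv y) = y \<otimes> inv h \<otimes> inv y" using y hc by (simp add: inv_mult_group m_assoc)
      ultimately show ?case by simp
    next
      case (eng h1 h2)
      have c1: "h1 \<in> carrier G" and c2: "h2 \<in> carrier G" using eng generate_in_carrier[OF S] by auto
      have "y \<otimes> (h1 \<otimes> h2) \<otimes> inv y = (y \<otimes> h1 \<otimes> inv y) \<otimes> (y \<otimes> h2 \<otimes> inv y)"
        using c1 c2 y by (simp add: m_assoc)
      thus ?case using generate.eng[OF eng(2,4)] by simp
    qed
  qed
qed

lemma coset_rep: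
  assumes fin: "finite (carrier G)" and N: "N \<lhd> G" and h: "h \<in> carrier G" "h \<notin> N"
  shows "\<exists>k \<rho>. is_rep G k \<rho> \<and> \<rho> h \<noteq> 1\<^sub>m k \<and> (\<forall>n\<in>N. \<rho> n = 1\<^sub>m k)"
proof -
  interpret Nn: normal N G by (rule N)
  have sgN: "subgroup N G" using N normal_imp_subgroup by blast
  have NC: "N \<subseteq> carrier G" using sgN subgroup.subset by blast
  define Cs where "Cs = rcosets N"
  have Cs_eq: "Cs = (\<lambda>a. N #> a) ` carrier G" unfolding Cs_def RCOSETS_def by auto
  have finCs: "finite Cs" unfolding Cs_eq using fin by simp
  define k where "k = card Cs"
  obtain f where f: "bij_betw f {0..<k} Cs" unfolding k_def using ex_bij_betw_nat_finite[OF finCs] by blast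
  define act where "act x C = (N #> x) <#> C" for x C
  have act_rep: "act x (N #> a) = N #> (x \<otimes> a)" if "x \<in> carrier G" "a \<in> carrier G" for x a
    unfolding act_def using Nn.rcos_sum that by simp
  have inCs: "C \<in> Cs \<Longrightarrow> \<exists>a\<in>carrier G. C = N #> a" for C unfolding Cs_eq by auto
  have act_closed: "act x C \<in> Cs" if "x \<in> carrier G" "C \<in> Cs" for x C
    using inCs[OF that(2)] act_rep that(1) unfolding Cs_eq by auto
  have act_mult: "act (x \<otimes> y) C = act x (act y C)" if xx: "x \<in> carrier G" and yy: "y \<in> carrier G" and CC: "C \<in> Cs" for x y C
  proof -
    obtain a where a: "a \<in> carrier G" "C = N #> a" using inCs[OF CC] by blast
    show ?thesis using a xx yy act_rep by (simp add: m_assoc)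
  qed
  have act_N: "act n C = C" if nN: "n \<in> N" and CC: "C \<in> Cs" for n C
  proof -
    obtain a where a: "a \<in> carrier G" "C = N #> a" using inCs[OF CC] by blast
    have n: "n \<in> carrier G" using nN NC by auto
    have "act n C = N #> (n \<otimes> a)" using act_rep n a by simp
    also have "\<dots> = (N #> n) #> a" using coset_mult_assoc[OF NC n a(1)] by simp
    also have "N #> n = N" using coset_join2[OF n sgN nN] .
    finally show ?thesis using a by simp
  qed
  have act_one: "act \<one> C = C" if "C \<in> Cs" for C using act_N[OF _ that] subgroup.one_closed[OF sgN] by simp
  have NCs: "N \<in> Cs" unfolding Cs_def using rcosetsI[OF NC one_closed] coset_mult_one[OF NC] by simp
  have act_h: "act h N \<noteq> N"
  proof
    assume e: "act h N = N"
    have "act h N = N #> h" using act_rep[OF h(1) one_closed] coset_mult_one[OF NC] h(1) by simp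
    hence "h \<in> N" using e rcos_self[OF h(1) sgN] by simp
    thus False using h by simp
  qed
  define \<rho> where "\<rho> x = mat k k (\<lambda>(i,j). if act x (f j) = f i then (1::complex) else 0)" for x
  have fin_f: "f i \<in> Cs" if "i < k" for i using f that unfolding bij_betw_def by auto
  have f_inj: "f i = f j \<longleftrightarrow> i = j" if "i < k" "j < k" for i j
    using f that unfolding bij_betw_def inj_on_def by auto
  have f_surj: "\<exists>l<k. f l = C" if "C \<in> Cs" for C
    using f that unfolding bij_betw_def by auto
  have rho_triv: "\<rho> x = 1\<^sub>m k" if "x \<in> carrier G" "\<And>C. C \<in> Cs \<Longrightarrow> act x C = C" for x
    unfolding \<rho>_def using that fin_f f_inj by (intro eq_matI) auto
  have rep: "is_rep G k \<rho>" unfolding is_rep_def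
  proof (intro conjI ballI)
    fix x assume "x \<in> carrier G" thus "\<rho> x \<in> carrier_mat k k" unfolding \<rho>_def by simp
  next
    show "\<rho> \<one> = 1\<^sub>m k" by (rule rho_triv[OF one_closed act_one])
  next
    fix x y assume x: "x \<in> carrier G" and y: "y \<in> carrier G"
    show "\<rho> (x \<otimes> y) = \<rho> x * \<rho> y"
    proof (rule eq_matI)
      fix i j assume ij: "i < dim_row (\<rho> x * \<rho> y)" "j < dim_col (\<rho> x * \<rho> y)"
      hence i: "i < k" and j: "j < k" unfolding \<rho>_def by auto
      define D where "D = act y (f j)"
      have D: "D \<in> Cs" unfolding D_def by (rule act_closed[OF y fin_f[OF j]])
      obtain l0 where l0: "l0 < k" "f l0 = D" using f_surj[OF D] by blast
      have "(\<rho> x * \<rho> y) $$ (i,j) = (\<Sum>l\<in>{0..<k}. \<rho> x $$ (i,l) * \<rho> y $$ (l,j))"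
        using i j unfolding \<rho>_def by (simp add: scalar_prod_def)
      also have "\<dots> = (\<Sum>l\<in>{0..<k}. if l = l0 then (if act x D = f i then 1 else 0) else 0)"
      proof (rule sum.cong[OF refl])
        fix l assume "l \<in> {0..<k}"
        hence l: "l < k" by simp
        have "(act y (f j) = f l) = (l = l0)" using f_inj[OF l l0(1)] l0(2) unfolding D_def by auto
        thus "\<rho> x $$ (i,l) * \<rho> y $$ (l,j) = (if l = l0 then (if act x D = f i then 1 else 0) else 0)"
          using i j l l0 unfolding \<rho>_def by auto
      qed
      also have "\<dots> = (if act x D = f i then 1 else 0)" using l0(1) by simp
      also have "act x D = act (x \<otimes> y) (f j)" unfolding D_def using act_mult[OF x y fin_f[OF j]] by simp
      finally show "\<rho> (x \<otimes> y) $$ (i,j) = (\<rho> x * \<rho> y) $$ (i,j)" using i j unfolding \<rho>_def by simp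
    qed (auto simp: \<rho>_def)
  qed
  have "\<rho> h \<noteq> 1\<^sub>m k"
  proof
    assume e: "\<rho> h = 1\<^sub>m k"
    obtain j0 where j0: "j0 < k" "f j0 = N" using f_surj[OF NCs] by blast
    have "\<rho> h $$ (j0, j0) = 0" unfolding \<rho>_def using j0 act_h by simp
    moreover have "1\<^sub>m k $$ (j0, j0) = (1::complex)" using j0 by simp
    ultimately show False using e by simp
  qed
  moreover have "\<forall>n\<in>N. \<rho> n = 1\<^sub>m k" using rho_triv act_N NC by auto
  ultimately show ?thesis using rep by blast
qed

lemma separate:
  assumes fin: "finite (carrier G)" and N: "N \<lhd> G" and h: "h \<in> carrier G" "h \<notin> N"
  shows "\<exists>\<chi>\<in>Irr G. N \<subseteq> char_ker G \<chi> \<and> h \<notin> char_ker G \<chi>"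
proof -
  from coset_rep[OF fin N h] obtain k \<rho> where r: "is_rep G k \<rho>" "\<rho> h \<noteq> 1\<^sub>m k" "\<forall>n\<in>N. \<rho> n = 1\<^sub>m k" by blast
  from reduce[OF grp fin h(1) r(1,2)] obtain d' \<sigma> where
    s: "irreducible_rep G d' \<sigma>" "\<sigma> h \<noteq> 1\<^sub>m d'" "\<forall>x\<in>carrier G. \<rho> x = 1\<^sub>m k \<longrightarrow> \<sigma> x = 1\<^sub>m d'" by blast
  have rs: "is_rep G d' \<sigma>" using s(1) unfolding irreducible_rep_def by auto
  have NC: "N \<subseteq> carrier G" using N normal_imp_subgroup subgroup.subset by blast
  have "character G \<sigma> \<in> Irr G" unfolding Irr_def using s(1) by blast
  moreover have "N \<subseteq> char_ker G (character G \<sigma>)"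
    using char_ker_iff[OF grp rs _ fin] s(3) r(3) NC by blast
  moreover have "h \<notin> char_ker G (character G \<sigma>)"
    using char_ker_iff[OF grp rs h(1) fin] s(2) by blast
  ultimately show ?thesis by blast
qed

end

theorem lemma2p5:
  fixes G :: "('a, 'b) monoid_scheme"
  assumes "group G" and "finite (carrier G)" and "\<not> comm_group G"
  shows "Xset G = (\<Union>g \<in> carrier G - grp_center G. Irr_quot G (comm_sub G g)) \<and>
         K_grp G = (\<Inter>g \<in> carrier G - grp_center G. comm_sub G g)"
proof -
  note grp = assms(1) and fin = assms(2)
  interpret group G by (rule grp)
  have P1: "Xset G = (\<Union>g \<in> carrier G - grp_center G. Irr_quot G (comm_sub G g))"
    by (rule part1[OF grp fin])
  have ne: "carrier G - grp_center G \<noteq> {}"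
  proof
    assume "carrier G - grp_center G = {}"
    hence "\<And>x y. x \<in> carrier G \<Longrightarrow> y \<in> carrier G \<Longrightarrow> x \<otimes>\<^bsub>G\<^esub> y = y \<otimes>\<^bsub>G\<^esub> x"
      unfolding grp_center_def by auto
    hence "comm_group G" by (rule group_comm_groupI)
    thus False using assms(3) by simp
  qed
  have "K_grp G = (\<Inter>g \<in> carrier G - grp_center G. comm_sub G g)"
  proof
    show "K_grp G \<subseteq> (\<Inter>g \<in> carrier G - grp_center G. comm_sub G g)"
    proof
      fix h assume hK: "h \<in> K_grp G"
      hence hc: "h \<in> carrier G" and hk: "\<And>\<chi>. \<chi> \<in> Xset G \<Longrightarrow> h \<in> char_ker G \<chi>"
        unfolding K_grp_def by auto
      show "h \<in> (\<Inter>g \<in> carrier G - grp_center G. comm_sub G g)"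
      proof
        fix g assume g: "g \<in> carrier G - grp_center G"
        show "h \<in> comm_sub G g"
        proof (rule ccontr)
          assume nh: "h \<notin> comm_sub G g"
          from separate[OF grp fin comm_sub_normal[OF grp] hc nh] g obtain \<chi> where
            chi: "\<chi> \<in> Irr G" "comm_sub G g \<subseteq> char_ker G \<chi>" "h \<notin> char_ker G \<chi>" by auto
          have "\<chi> \<in> Xset G" unfolding P1 using chi g unfolding Irr_quot_def by auto
          thus False using hk chi(3) by blast
        qed
      qed
    qed
  next
    show "(\<Inter>g \<in> carrier G - grp_center G. comm_sub G g) \<subseteq> K_grp G"
    proof
      fix h assume h: "h \<in> (\<Inter>g \<in> carrier G - grp_center G. comm_sub G g)"
      from ne obtain g0 where g0: "g0 \<in> carrier G - grp_center G" by blast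
      have hc: "h \<in> carrier G" using h g0 comm_sub_carrier[OF grp] by blast
      have "h \<in> char_ker G \<chi>" if chi: "\<chi> \<in> Xset G" for \<chi>
      proof -
        from chi obtain g where g: "g \<in> carrier G - grp_center G" and q: "\<chi> \<in> Irr_quot G (comm_sub G g)"
          unfolding P1 by auto
        have "h \<in> comm_sub G g" using h g by blast
        thus ?thesis using q unfolding Irr_quot_def by auto
      qed
      thus "h \<in> K_grp G" unfolding K_grp_def using hc by auto
    qed
  qed
  with P1 show ?thesis by blast
qed

end
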